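(* Let $F(x,y)=ax^4+bx^3y+cx^2y^2+dxy^3+ey^4$ be an integral binary quartic form with $a\neq0$ and $b\neq 0$. Let $p>3$ be a prime with $\nu_p(b)>0$. Then $R(F)$ is dense in $\mathbb{Q}_p$ if one of the following holds: (1) $p\equiv 1\pmod 3$, $a^2c^2+12a^3e\equiv 0\pmod p$, and $8a^3c^3+27a^4d^2$ is a cubic non-residue modulo $p$; (2) $a^2c^2+12a^3e\not\equiv 0\pmod p$ and $s_{p+1}\equiv a^2c^2-4a^3e\pmod p$, where the sequence $(s_n)$ is defined by $s_0=3$, $s_1=-2ac$, $s_2=2a^2c^2+8a^3e$, and $s_{n+3}=-2acs_{n+2}+(4a^3e-a^2c^2)s_{n+1}+a^4d^2s_n$ for $n\geq 0$.
   Context: $\nu_p$ is the $p$-adic valuation. $R(F)=\{F(x_1,y_1)/F(x_2,y_2) : x_i,y_i\in\mathbb{Z},\ F(x_2,y_2)\neq 0\}$, and density is in the $p$-adic topology. *)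

theory Defs
  imports "HOL-Number_Theory.Number_Theory"
begin

definition quartic_form :: "int \<Rightarrow> int \<Rightarrow> int \<Rightarrow> int \<Rightarrow> int \<Rightarrow> int \<Rightarrow> int \<Rightarrow> int" where
  "quartic_form a b c d e x y = a*x^4 + b*x^3*y + c*x^2*y^2 + d*x*y^3 + e*y^4"

definition ratio_set :: "(int \<Rightarrow> int \<Rightarrow> int) \<Rightarrow> rat set" where
  "ratio_set F = {of_int (F x1 y1) / of_int (F x2 y2) | x1 y1 x2 y2. F x2 y2 \<noteq> 0}"

definition padic_val_rat :: "nat \<Rightarrow> rat \<Rightarrow> int" where
  "padic_val_rat p q = (case quotient_of q of (n, m) \<Rightarrow>
      int (multiplicity (int p) n) - int (multiplicity (int p) m))"

text \<open>A set of rationals is dense in Q_p. Since Q is dense in Q_p, this means: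
  every p-adic ball around a rational point, of radius p^(-k), meets S.\<close>
definition padic_dense :: "nat \<Rightarrow> rat set \<Rightarrow> bool" where
  "padic_dense p S \<longleftrightarrow>
     (\<forall>x::rat. \<forall>k::int. \<exists>r\<in>S. r = x \<or> padic_val_rat p (r - x) \<ge> k)"

definition cubic_residue :: "nat \<Rightarrow> int \<Rightarrow> bool" where
  "cubic_residue p n \<longleftrightarrow> (\<exists>x::int. [x^3 = n] (mod int p))"

definition cubic_nonresidue :: "nat \<Rightarrow> int \<Rightarrow> bool" where
  "cubic_nonresidue p n \<longleftrightarrow> \<not> (int p dvd n) \<and> \<not> cubic_residue p n"

fun s_seq :: "int \<Rightarrow> int \<Rightarrow> int \<Rightarrow> int \<Rightarrow> nat \<Rightarrow> int" where
  "s_seq a c d e 0 = 3"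
| "s_seq a c d e (Suc 0) = -2*a*c"
| "s_seq a c d e (Suc (Suc 0)) = 2*a^2*c^2 + 8*a^3*e"
| "s_seq a c d e (Suc (Suc (Suc n))) =
     -2*a*c * s_seq a c d e (Suc (Suc n)) + (4*a^3*e - a^2*c^2) * s_seq a c d e (Suc n)
     + a^4*d^2 * s_seq a c d e n"

end

theory Submission
  imports Defs "HOL-Algebra.Algebraic_Closure" "HOL-Computational_Algebra.Polynomial"
begin

hide_const (open) Divisibility.prime





lemma padic_val_frac:
  fixes n m :: int
  assumes p: "prime p" and n: "n \<noteq> 0" and m: "m \<noteq> 0"
  shows "padic_val_rat p (of_int n / of_int m) = int (multiplicity (int p) n) - int (multiplicity (int p) m)"
proof -
  have pe: "prime_elem (int p)" using p by simp
  obtain n' m' where q: "quotient_of (of_int n / of_int m) = (n', m')" by (cases "quotient_of (of_int n / of_int m :: rat)") auto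
  have m'pos: "m' > 0" using q quotient_of_denom_pos by blast
  have eq: "(of_int n / of_int m :: rat) = of_int n' / of_int m'" using q quotient_of_div by blast
  hence "of_int n * of_int m' = (of_int n' * of_int m :: rat)" using m m'pos by (simp add: field_simps)
  hence eqi: "n * m' = n' * m" by (metis of_int_eq_iff of_int_mult)
  have n'0: "n' \<noteq> 0" using eqi n m'pos by auto
  have "multiplicity (int p) (n * m') = multiplicity (int p) (n' * m)" using eqi by simp
  hence "multiplicity (int p) n + multiplicity (int p) m' = multiplicity (int p) n' + multiplicity (int p) m"
    using prime_elem_multiplicity_mult_distrib[OF pe] n m n'0 m'pos by (metis less_irrefl)
  thus ?thesis unfolding padic_val_rat_def q by simp
qed

definition qf :: "int \<Rightarrow> int \<Rightarrow> int \<Rightarrow> int \<Rightarrow> int \<Rightarrow> int \<Rightarrow> int" where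
  "qf a b c d e x = a*x^4 + b*x^3 + c*x^2 + d*x + e"
definition dqf :: "int \<Rightarrow> int \<Rightarrow> int \<Rightarrow> int \<Rightarrow> int \<Rightarrow> int" where
  "dqf a b c d x = 4*a*x^3 + 3*b*x^2 + 2*c*x + d"

lemma qf_taylor: "qf a b c d e (x + t) = qf a b c d e x + t * dqf a b c d x
   + t^2 * (6*a*x^2 + 3*b*x + c + t*(4*a*x + b) + a*t^2)"
  unfolding qf_def dqf_def by (simp add: algebra_simps power2_eq_square power3_eq_cube power4_eq_xxxx)

lemma dqf_cong: "[x = r] (mod q) \<Longrightarrow> [dqf a b c d x = dqf a b c d r] (mod q)"
  unfolding dqf_def by (intro cong_add cong_mult cong_pow cong_refl) auto

lemma hensel:
  fixes p :: nat
  assumes p: "prime p" and r1: "int p dvd qf a b c d e r - T" and r2: "\<not> int p dvd dqf a b c d r"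
  shows "N \<ge> 1 \<Longrightarrow> \<exists>x. [x = r] (mod int p) \<and> int p ^ N dvd qf a b c d e x - T"
proof (induction N rule: dec_induct)
  case base
  then show ?case using r1 by (intro exI[of _ r]) auto
next
  case (step N)
  then obtain x where x1: "[x = r] (mod int p)" and x2: "int p ^ N dvd qf a b c d e x - T" by blast
  obtain m where m: "qf a b c d e x - T = int p ^ N * m" using x2 by (auto elim: dvdE)
  have "[dqf a b c d x = dqf a b c d r] (mod int p)" using dqf_cong[OF x1] .
  hence ndv: "\<not> int p dvd dqf a b c d x" using r2 by (simp add: cong_dvd_iff)
  have cop: "coprime (dqf a b c d x) (int p)"
    using ndv p by (metis coprime_commute prime_imp_coprime prime_nat_int_transfer)
  obtain u where u: "[dqf a b c d x * u = 1] (mod int p)"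
    using cop by (metis cong_solve_coprime_int)
  define t where "t = - m * u"
  have "[m + t * dqf a b c d x = m - m * (dqf a b c d x * u)] (mod int p)"
    unfolding t_def by (simp add: algebra_simps)
  also have "[m - m * (dqf a b c d x * u) = m - m * 1] (mod int p)"
    by (intro cong_diff cong_mult cong_refl u)
  finally have "int p dvd m + t * dqf a b c d x" by (simp add: cong_0_iff)
  then obtain k where k: "m + t * dqf a b c d x = int p * k" by (auto elim: dvdE)
  define x' where "x' = x + int p ^ N * t"
  define G where "G = 6*a*x^2 + 3*b*x + c + (int p ^ N * t)*(4*a*x + b) + a*(int p ^ N * t)^2"
  have e1: "qf a b c d e x' - T = (qf a b c d e x - T) + (int p ^ N * t) * dqf a b c d x + (int p ^ N * t)^2 * G"
    unfolding x'_def G_def by (simp add: qf_taylor)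
  have d1: "int p ^ Suc N dvd (qf a b c d e x - T) + (int p ^ N * t) * dqf a b c d x"
  proof -
    have "(qf a b c d e x - T) + (int p ^ N * t) * dqf a b c d x = int p ^ N * (m + t * dqf a b c d x)"
      using m by (simp add: algebra_simps)
    also have "\<dots> = int p ^ Suc N * k" using k by simp
    finally show ?thesis by simp
  qed
  have d2: "int p ^ Suc N dvd (int p ^ N * t)^2 * G"
  proof -
    have "(int p ^ N * t)^2 * G = int p ^ (N + N) * (t^2 * G)"
      by (simp add: power_mult_distrib power_add power2_eq_square)
    moreover have "int p ^ Suc N dvd int p ^ (N + N)"
      using step(1) by (intro le_imp_power_dvd) simp
    ultimately show ?thesis by (metis dvd_mult2)
  qed
  have "int p ^ Suc N dvd qf a b c d e x' - T" unfolding e1 using d1 d2 by (simp add: dvd_add)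
  moreover have "[x' = r] (mod int p)"
  proof -
    have "[x' = x + 0] (mod int p)" unfolding x'_def using step(1)
      by (intro cong_add cong_refl) (simp add: cong_0_iff)
    thus ?thesis using x1 by (simp add: cong_trans)
  qed
  ultimately show ?case by blast
qed


lemma mult_geI':
  fixes x :: int
  assumes p: "prime p" and x: "x \<noteq> 0" and dv: "int p ^ N dvd x"
  shows "N \<le> multiplicity (int p) x"
proof -
  have "prime (int p)" using p by simp
  hence "\<not> is_unit (int p)" using not_prime_unit by blast
  thus ?thesis using x dv p by (intro multiplicity_geI) (auto simp: prime_gt_0_nat)
qed

lemma quartic_form_1: "quartic_form a b c d e x 1 = qf a b c d e x"
  unfolding quartic_form_def qf_def by simp

lemma density:
  fixes p :: nat
  assumes p: "prime p" and a: "a \<noteq> 0" and r1: "int p dvd qf a b c d e r"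
    and r2: "\<not> int p dvd dqf a b c d r"
  shows "padic_dense p (ratio_set (quartic_form a b c d e))"
  unfolding padic_dense_def
proof (intro allI)
  fix q :: rat and k :: int
  let ?S = "ratio_set (quartic_form a b c d e)"
  have pe: "prime_elem (int p)" using p by simp
  have p1: "int p > 1" using p prime_gt_1_nat by auto
  have inS: "rat_of_int (qf a b c d e x1) / rat_of_int (qf a b c d e x2) \<in> ?S"
    if "qf a b c d e x2 \<noteq> 0" for x1 x2
  proof -
    have "\<exists>x1' y1 x2' y2. rat_of_int (qf a b c d e x1) / rat_of_int (qf a b c d e x2) = rat_of_int (quartic_form a b c d e x1' y1) / rat_of_int (quartic_form a b c d e x2' y2) \<and> quartic_form a b c d e x2' y2 \<noteq> 0"
      by (rule exI[of _ x1], rule exI[of _ 1], rule exI[of _ x2], rule exI[of _ 1]) (simp add: quartic_form_1 that)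
    thus ?thesis unfolding ratio_set_def by simp
  qed
  show "\<exists>r\<in>?S. r = q \<or> k \<le> padic_val_rat p (r - q)"
  proof (cases "q = 0")
    case True
    have "rat_of_int (quartic_form a b c d e 0 0) / rat_of_int (quartic_form a b c d e 1 0) \<in> ?S"
    proof -
      have "\<exists>x1' y1 x2' y2. rat_of_int (quartic_form a b c d e 0 0) / rat_of_int (quartic_form a b c d e 1 0) = rat_of_int (quartic_form a b c d e x1' y1) / rat_of_int (quartic_form a b c d e x2' y2) \<and> quartic_form a b c d e x2' y2 \<noteq> 0"
        by (rule exI[of _ 0], rule exI[of _ 0], rule exI[of _ 1], rule exI[of _ 0]) (simp add: quartic_form_def a)
      thus ?thesis unfolding ratio_set_def by simp
    qed
    moreover have "rat_of_int (quartic_form a b c d e 0 0) / rat_of_int (quartic_form a b c d e 1 0) = 0"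
      by (simp add: quartic_form_def)
    ultimately show ?thesis using True by metis
  next
    case False
    obtain U W where qUW: "quotient_of q = (U, W)" by (cases "quotient_of q") auto
    have Wpos: "W > 0" using qUW quotient_of_denom_pos by blast
    have qeq: "q = of_int U / of_int W" using qUW quotient_of_div by blast
    have U0: "U \<noteq> 0" using False qeq by auto
    define N where "N = nat k + 2 + 2 * multiplicity (int p) W"
    have N1: "N \<ge> 1" unfolding N_def by simp
    have h1: "int p dvd qf a b c d e r - int p * U" using r1 by simp
    have h2: "int p dvd qf a b c d e r - int p * W" using r1 by simp
    obtain x1 where x1: "int p ^ N dvd qf a b c d e x1 - int p * U"
      using hensel[OF p h1 r2 N1] by blast
    obtain x2 where x2: "int p ^ N dvd qf a b c d e x2 - int p * W"
      using hensel[OF p h2 r2 N1] by blast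
    obtain \<alpha> where al: "qf a b c d e x1 - int p * U = int p ^ N * \<alpha>" using x1 by (auto elim: dvdE)
    obtain \<beta> where be: "qf a b c d e x2 - int p * W = int p ^ N * \<beta>" using x2 by (auto elim: dvdE)
    define F1 where "F1 = qf a b c d e x1"
    define F2 where "F2 = qf a b c d e x2"
    have F1e: "F1 = int p * U + int p ^ N * \<alpha>" using al unfolding F1_def by simp
    have F2e: "F2 = int p * W + int p ^ N * \<beta>" using be unfolding F2_def by simp
    have mpW: "multiplicity (int p) (int p * W) = Suc (multiplicity (int p) W)"
      using pe Wpos prime_elem_multiplicity_mult_distrib[OF pe, of "int p" W] p1 by simp
    have F2m: "F2 \<noteq> 0 \<and> multiplicity (int p) F2 = Suc (multiplicity (int p) W)"
    proof (cases "\<beta> = 0")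
      case True
      then show ?thesis using F2e mpW Wpos p1 by simp
    next
      case False
      have "multiplicity (int p) (int p ^ N * \<beta>) \<ge> N"
        using False p1 by (intro mult_geI'[OF p]) simp_all
      hence lt: "multiplicity (int p) (int p * W) < multiplicity (int p) (int p ^ N * \<beta>)"
        using mpW unfolding N_def by linarith
      have nz1: "int p * W \<noteq> 0" using Wpos p1 by simp
      have nz2: "int p ^ N * \<beta> \<noteq> 0" using False p1 by simp
      have "multiplicity (int p) F2 = Suc (multiplicity (int p) W)"
        using multiplicity_sum_lt[OF lt nz1 nz2] mpW F2e by simp
      moreover have "F2 \<noteq> 0"
      proof
        assume "F2 = 0"
        hence "int p ^ N * \<beta> = - (int p * W)" using F2e by simp
        hence "int p ^ N dvd int p * W" by (metis dvd_minus_iff dvd_triv_left)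
        hence "N \<le> multiplicity (int p) (int p * W)" using nz1 by (intro mult_geI'[OF p])
        thus False using mpW unfolding N_def by linarith
      qed
      ultimately show ?thesis by simp
    qed
    let ?r = "rat_of_int F1 / rat_of_int F2"
    have rS: "?r \<in> ?S" using inS F2m unfolding F1_def F2_def by blast
    show ?thesis
    proof (cases "?r = q")
      case True then show ?thesis using rS by blast
    next
      case False
      define num where "num = F1 * W - U * F2"
      have numeq: "num = int p ^ N * (W * \<alpha> - U * \<beta>)"
        unfolding num_def F1e F2e by (simp add: algebra_simps)
      have diff: "?r - q = rat_of_int num / rat_of_int (F2 * W)"
        unfolding qeq num_def using F2m Wpos by (simp add: field_simps)
      have num0: "num \<noteq> 0" using False diff by auto
      have den0: "F2 * W \<noteq> 0" using F2m Wpos by simp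
      have mnum: "multiplicity (int p) num \<ge> N"
        using numeq num0 by (intro mult_geI'[OF p]) simp_all
      have mden: "multiplicity (int p) (F2 * W) = Suc (2 * multiplicity (int p) W)"
        using prime_elem_multiplicity_mult_distrib[OF pe, of F2 W] F2m Wpos by simp
      have "padic_val_rat p (?r - q) = int (multiplicity (int p) num) - int (multiplicity (int p) (F2 * W))"
        unfolding diff using padic_val_frac[OF p num0 den0] .
      also have "\<dots> \<ge> k" using mnum mden unfolding N_def by linarith
      finally show ?thesis using rS by blast
    qed
  qed
qed




lemma (in cring) binomial_thm:
  assumes x: "x \<in> carrier R" and y: "y \<in> carrier R"
  shows "(x \<oplus> y) [^] n = (\<Oplus>k\<in>{..n}. [(n choose k)] \<cdot>\<^bsub>R\<^esub> (x [^] k \<otimes> y [^] (n - k)))"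
proof (induction n)
  case 0
  show ?case using x y by (simp add: finsum_0)
next
  case (Suc n)
  define S where "S = (\<Oplus>k\<in>{..n}. [(n choose k)] \<cdot>\<^bsub>R\<^esub> (x [^] k \<otimes> y [^] (n - k)))"
  have SC: "S \<in> carrier R" unfolding S_def using x y by (intro finsum_closed) auto
  have "(x \<oplus> y) [^] Suc n = S \<otimes> x \<oplus> S \<otimes> y"
    using Suc x y SC by (simp add: S_def[symmetric] r_distr)
  also have "S \<otimes> x = (\<Oplus>k\<in>{..n}. [(n choose k)] \<cdot>\<^bsub>R\<^esub> (x [^] Suc k \<otimes> y [^] (n - k)))"
  proof -
    have "S \<otimes> x = (\<Oplus>k\<in>{..n}. ([(n choose k)] \<cdot>\<^bsub>R\<^esub> (x [^] k \<otimes> y [^] (n - k))) \<otimes> x)"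
      unfolding S_def using x y by (intro finsum_ldistr) auto
    also have "\<dots> = (\<Oplus>k\<in>{..n}. [(n choose k)] \<cdot>\<^bsub>R\<^esub> (x [^] Suc k \<otimes> y [^] (n - k)))"
    proof (intro finsum_cong')
      fix k assume "k \<in> {..n}"
      have "([(n choose k)] \<cdot>\<^bsub>R\<^esub> (x [^] k \<otimes> y [^] (n - k))) \<otimes> x = [(n choose k)] \<cdot>\<^bsub>R\<^esub> ((x [^] k \<otimes> y [^] (n - k)) \<otimes> x)"
        using x y by (intro add_pow_ldistr) auto
      also have "(x [^] k \<otimes> y [^] (n - k)) \<otimes> x = x [^] Suc k \<otimes> y [^] (n - k)"
        using x y by (simp add: m_ac)
      finally show "([(n choose k)] \<cdot>\<^bsub>R\<^esub> (x [^] k \<otimes> y [^] (n - k))) \<otimes> x = [(n choose k)] \<cdot>\<^bsub>R\<^esub> (x [^] Suc k \<otimes> y [^] (n - k))" .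
    qed (use x y in auto)
    finally show ?thesis .
  qed
  also have "S \<otimes> y = (\<Oplus>k\<in>{..n}. [(n choose k)] \<cdot>\<^bsub>R\<^esub> (x [^] k \<otimes> y [^] (Suc n - k)))"
  proof -
    have "S \<otimes> y = (\<Oplus>k\<in>{..n}. ([(n choose k)] \<cdot>\<^bsub>R\<^esub> (x [^] k \<otimes> y [^] (n - k))) \<otimes> y)"
      unfolding S_def using x y by (intro finsum_ldistr) auto
    also have "\<dots> = (\<Oplus>k\<in>{..n}. [(n choose k)] \<cdot>\<^bsub>R\<^esub> (x [^] k \<otimes> y [^] (Suc n - k)))"
    proof (intro finsum_cong')
      fix k assume k: "k \<in> {..n}"
      have "([(n choose k)] \<cdot>\<^bsub>R\<^esub> (x [^] k \<otimes> y [^] (n - k))) \<otimes> y = [(n choose k)] \<cdot>\<^bsub>R\<^esub> ((x [^] k \<otimes> y [^] (n - k)) \<otimes> y)"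
        using x y by (intro add_pow_ldistr) auto
      also have "(x [^] k \<otimes> y [^] (n - k)) \<otimes> y = x [^] k \<otimes> y [^] (Suc n - k)"
        using x y k by (simp add: m_ac Suc_diff_le)
      finally show "([(n choose k)] \<cdot>\<^bsub>R\<^esub> (x [^] k \<otimes> y [^] (n - k))) \<otimes> y = [(n choose k)] \<cdot>\<^bsub>R\<^esub> (x [^] k \<otimes> y [^] (Suc n - k))" .
    qed (use x y in auto)
    finally show ?thesis .
  qed
  also have "(\<Oplus>k\<in>{..n}. [(n choose k)] \<cdot>\<^bsub>R\<^esub> (x [^] k \<otimes> y [^] (Suc n - k)))
     = (\<Oplus>k\<in>{..n}. [(n choose Suc k)] \<cdot>\<^bsub>R\<^esub> (x [^] Suc k \<otimes> y [^] (n - k))) \<oplus> y [^] Suc n"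
  proof -
    define g where "g = (\<lambda>k. [(n choose k)] \<cdot>\<^bsub>R\<^esub> (x [^] k \<otimes> y [^] (Suc n - k)))"
    have gC: "g \<in> {..Suc n} \<rightarrow> carrier R" unfolding g_def using x y by auto
    have "(\<Oplus>k\<in>{..Suc n}. g k) = g (Suc n) \<oplus> (\<Oplus>k\<in>{..n}. g k)"
      using gC by (simp add: finsum_Suc)
    also have "g (Suc n) = \<zero>" unfolding g_def by (simp add: binomial_eq_0)
    moreover have "(\<Oplus>k\<in>{..n}. g k) \<in> carrier R" using gC by (intro finsum_closed) auto
    ultimately have e1: "(\<Oplus>k\<in>{..Suc n}. g k) = (\<Oplus>k\<in>{..n}. g k)"
      by simp
    have "(\<Oplus>k\<in>{..Suc n}. g k) = (\<Oplus>k\<in>{..n}. g (Suc k)) \<oplus> g 0"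
      using gC by (rule finsum_Suc2)
    also have "g 0 = y [^] Suc n" unfolding g_def using y by simp
    also have "(\<Oplus>k\<in>{..n}. g (Suc k)) = (\<Oplus>k\<in>{..n}. [(n choose Suc k)] \<cdot>\<^bsub>R\<^esub> (x [^] Suc k \<otimes> y [^] (n - k)))"
      unfolding g_def by simp
    finally show ?thesis using e1 unfolding g_def by simp
  qed
  also have "(\<Oplus>k\<in>{..n}. [(n choose k)] \<cdot>\<^bsub>R\<^esub> (x [^] Suc k \<otimes> y [^] (n - k))) \<oplus>
     ((\<Oplus>k\<in>{..n}. [(n choose Suc k)] \<cdot>\<^bsub>R\<^esub> (x [^] Suc k \<otimes> y [^] (n - k))) \<oplus> y [^] Suc n)
   = (\<Oplus>k\<in>{..n}. [(Suc n choose Suc k)] \<cdot>\<^bsub>R\<^esub> (x [^] Suc k \<otimes> y [^] (n - k))) \<oplus> y [^] Suc n"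
  proof -
    have "(\<Oplus>k\<in>{..n}. [(Suc n choose Suc k)] \<cdot>\<^bsub>R\<^esub> (x [^] Suc k \<otimes> y [^] (n - k)))
       = (\<Oplus>k\<in>{..n}. [(n choose k)] \<cdot>\<^bsub>R\<^esub> (x [^] Suc k \<otimes> y [^] (n - k)) \<oplus> [(n choose Suc k)] \<cdot>\<^bsub>R\<^esub> (x [^] Suc k \<otimes> y [^] (n - k)))"
      by (intro finsum_cong') (use x y in \<open>auto simp: add.nat_pow_mult\<close>)
    also have "\<dots> = (\<Oplus>k\<in>{..n}. [(n choose k)] \<cdot>\<^bsub>R\<^esub> (x [^] Suc k \<otimes> y [^] (n - k))) \<oplus> (\<Oplus>k\<in>{..n}. [(n choose Suc k)] \<cdot>\<^bsub>R\<^esub> (x [^] Suc k \<otimes> y [^] (n - k)))"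
      using x y by (intro finsum_addf) auto
    finally show ?thesis using x y by (simp add: a_assoc finsum_closed)
  qed
  also have "\<dots> = (\<Oplus>k\<in>{..Suc n}. [(Suc n choose k)] \<cdot>\<^bsub>R\<^esub> (x [^] k \<otimes> y [^] (Suc n - k)))"
  proof -
    have "(\<Oplus>k\<in>{..Suc n}. [(Suc n choose k)] \<cdot>\<^bsub>R\<^esub> (x [^] k \<otimes> y [^] (Suc n - k)))
       = (\<Oplus>k\<in>{..n}. [(Suc n choose Suc k)] \<cdot>\<^bsub>R\<^esub> (x [^] Suc k \<otimes> y [^] (Suc n - Suc k))) \<oplus> [(Suc n choose 0)] \<cdot>\<^bsub>R\<^esub> (x [^] (0::nat) \<otimes> y [^] (Suc n - 0))"
      using x y by (intro finsum_Suc2) auto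
    thus ?thesis using y by simp
  qed
  finally show ?case .
qed


lemma (in cring) add_pow_char_zero:
  assumes char: "[(p::nat)] \<cdot>\<^bsub>R\<^esub> \<one> = \<zero>" and v: "v \<in> carrier R"
  shows "[(p * m)] \<cdot>\<^bsub>R\<^esub> v = \<zero>"
proof -
  have "[p] \<cdot>\<^bsub>R\<^esub> v = [p] \<cdot>\<^bsub>R\<^esub> (\<one> \<otimes> v)" using v by simp
  also have "\<dots> = ([p] \<cdot>\<^bsub>R\<^esub> \<one>) \<otimes> v" using v by (intro add_pow_ldistr[symmetric]) auto
  finally have pv: "[p] \<cdot>\<^bsub>R\<^esub> v = \<zero>" using char v by simp
  have "[(p * m)] \<cdot>\<^bsub>R\<^esub> v = [m] \<cdot>\<^bsub>R\<^esub> ([p] \<cdot>\<^bsub>R\<^esub> v)"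
    using v add.nat_pow_pow[of v m p] by (simp add: mult.commute)
  thus ?thesis using pv by simp
qed

lemma (in cring) freshman:
  assumes p: "prime (p::nat)" and char: "[p] \<cdot>\<^bsub>R\<^esub> \<one> = \<zero>"
    and x: "x \<in> carrier R" and y: "y \<in> carrier R"
  shows "(x \<oplus> y) [^] p = x [^] p \<oplus> y [^] p"
proof -
  define f where "f = (\<lambda>k. [(p choose k)] \<cdot>\<^bsub>R\<^esub> (x [^] k \<otimes> y [^] (p - k)))"
  have fC: "f \<in> UNIV \<rightarrow> carrier R" unfolding f_def using x y by auto
  have van: "f k = \<zero>" if "0 < k" "k < p" for k
  proof -
    have "p dvd (p choose k)" using dvd_choose_prime[of k p] that p by auto
    then obtain m where "p choose k = p * m" by (auto elim: dvdE)
    thus ?thesis unfolding f_def using add_pow_char_zero[OF char] x y by simp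
  qed
  obtain r where r: "p = Suc (Suc r)" using p prime_gt_1_nat
    by (metis less_imp_Suc_add plus_1_eq_Suc add_Suc_right)
  have "(x \<oplus> y) [^] p = (\<Oplus>k\<in>{..Suc (Suc r)}. f k)" unfolding f_def r by (rule binomial_thm[OF x y])
  also have "\<dots> = f (Suc (Suc r)) \<oplus> (\<Oplus>k\<in>{..Suc r}. f k)" using fC by (intro finsum_Suc) auto
  also have "(\<Oplus>k\<in>{..Suc r}. f k) = (\<Oplus>k\<in>{..r}. f (Suc k)) \<oplus> f 0" using fC by (intro finsum_Suc2) auto
  also have "(\<Oplus>k\<in>{..r}. f (Suc k)) = (\<Oplus>k\<in>{..r}. \<zero>)"
    using fC van r by (intro finsum_cong') auto
  also have "(\<Oplus>k\<in>{..r}. \<zero>) = \<zero>" by (rule finsum_zero)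
  also have "f 0 = y [^] p" unfolding f_def using y by simp
  also have "f (Suc (Suc r)) = x [^] p" unfolding f_def using x r by simp
  finally show ?thesis using x y by simp
qed


lemma (in algebraically_closed) monic_root:
  assumes cs: "set cs \<subseteq> carrier L" and ne: "cs \<noteq> []"
  shows "\<exists>x\<in>carrier L. eval (\<one> # cs) x = \<zero>"
proof -
  define P where "P = \<one> # cs"
  have PC: "P \<in> carrier (poly_ring L)"
    unfolding P_def univ_poly_def polynomial_def using cs by auto
  hence "splitted P" using roots_over_carrier by blast
  hence "roots P \<noteq> {#}" unfolding splitted_def P_def using ne by auto
  then obtain x where "x \<in># roots P" by blast
  hence "is_root P x" using roots_mem_iff_is_root[OF PC] by auto
  thus ?thesis unfolding is_root_def P_def by auto
qed

lemma (in ring) minus_eq_zero_iff: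
  assumes "a \<in> carrier R" "b \<in> carrier R"
  shows "a \<ominus> b = \<zero> \<longleftrightarrow> a = b"
proof
  assume "a \<ominus> b = \<zero>"
  hence "a \<ominus> b \<oplus> b = b" using assms by simp
  thus "a = b" using assms by (simp add: a_minus_def a_assoc l_neg)
next
  assume "a = b" thus "a \<ominus> b = \<zero>" using assms by (simp add: a_minus_def r_neg)
qed

lemma (in domain) pow_eq_zero:
  assumes "a \<in> carrier R" "a [^] (n::nat) = \<zero>" "n > 0"
  shows "a = \<zero>"
  using assms(2,3)
proof (induction n)
  case 0 then show ?case by simp
next
  case (Suc n)
  hence "a [^] n = \<zero> \<or> a = \<zero>" using assms(1) integral_iff by simp
  then show ?case using Suc by (cases n) auto
qed

locale frob = algebraically_closed L for L (structure) +
  fixes p :: nat and h :: "int \<Rightarrow> 'a"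
  assumes p_prime: "prime p" and p_gt3: "p > 3"
    and h_carrier [simp]: "h n \<in> carrier L"
    and h_add: "h (m + n) = h m \<oplus> h n"
    and h_mult: "h (m * n) = h m \<otimes> h n"
    and h_one: "h 1 = \<one>"
    and h_zero_iff: "h n = \<zero> \<longleftrightarrow> int p dvd n"
begin

lemma h_0 [simp]: "h 0 = \<zero>" using h_zero_iff by simp

lemma h_uminus: "h (- n) = \<ominus> h n"
proof -
  have "h (- n) \<oplus> h n = \<zero>" using h_add[of "-n" n] by simp
  thus ?thesis by (intro minus_equality[symmetric]) auto
qed

lemma h_diff: "h (m - n) = h m \<ominus> h n"
  using h_add[of m "-n"] h_uminus[of n] by (simp add: a_minus_def)

lemma h_pow: "h (n ^ k) = h n [^] k"
  by (induction k) (simp_all add: h_one h_mult m_comm[of "h n"])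

lemma h_numeral_One: "h (numeral Num.One) = \<one>" using h_one by simp
lemma h_numeral_Bit0: "h (numeral (Num.Bit0 k)) = h (numeral k) \<oplus> h (numeral k)"
  by (simp only: numeral_Bit0 h_add)
lemma h_numeral_Bit1: "h (numeral (Num.Bit1 k)) = h (numeral k) \<oplus> h (numeral k) \<oplus> \<one>"
  by (simp only: numeral_Bit1 h_add h_one)

lemmas h_simps = h_add h_mult h_one h_diff h_uminus h_pow h_numeral_One h_numeral_Bit0 h_numeral_Bit1

lemma add_pow_one_h: "[(n::nat)] \<cdot>\<^bsub>L\<^esub> \<one> = h (int n)"
proof (induction n)
  case 0 then show ?case by simp
next
  case (Suc n)
  have "[Suc n] \<cdot>\<^bsub>L\<^esub> \<one> = [n] \<cdot>\<^bsub>L\<^esub> \<one> \<oplus> \<one>" by (simp add: add.nat_pow_Suc)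
  also have "\<dots> = h (int n + 1)" using Suc by (simp add: h_add h_one)
  finally show ?case by (simp add: add.commute)
qed

lemma char_p: "[p] \<cdot>\<^bsub>L\<^esub> \<one> = \<zero>"
  using add_pow_one_h[of p] h_zero_iff by simp

definition phi :: "'a \<Rightarrow> 'a" where "phi x = x [^] p"

lemma phi_carrier [simp]: "x \<in> carrier L \<Longrightarrow> phi x \<in> carrier L"
  unfolding phi_def by simp

lemma phi_add: "x \<in> carrier L \<Longrightarrow> y \<in> carrier L \<Longrightarrow> phi (x \<oplus> y) = phi x \<oplus> phi y"
  unfolding phi_def using freshman[OF p_prime char_p] by simp

lemma phi_mult: "x \<in> carrier L \<Longrightarrow> y \<in> carrier L \<Longrightarrow> phi (x \<otimes> y) = phi x \<otimes> phi y"
  unfolding phi_def by (simp add: nat_pow_distrib)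

lemma phi_zero [simp]: "phi \<zero> = \<zero>"
  unfolding phi_def using p_gt3 by (simp add: nat_pow_zero)

lemma phi_one [simp]: "phi \<one> = \<one>"
  unfolding phi_def by simp

lemma phi_uminus: "x \<in> carrier L \<Longrightarrow> phi (\<ominus> x) = \<ominus> phi x"
proof -
  assume x: "x \<in> carrier L"
  have "phi (\<ominus> x) \<oplus> phi x = \<zero>" using phi_add[of "\<ominus> x" x] x by (simp add: l_neg)
  thus ?thesis using x by (intro minus_equality[symmetric]) auto
qed

lemma phi_minus: "x \<in> carrier L \<Longrightarrow> y \<in> carrier L \<Longrightarrow> phi (x \<ominus> y) = phi x \<ominus> phi y"
  by (simp add: a_minus_def phi_add phi_uminus)

lemma phi_pow: "x \<in> carrier L \<Longrightarrow> phi (x [^] (k::nat)) = phi x [^] k"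
  by (induction k) (auto simp: phi_mult)

lemma phi_h_nat: "phi (h (int n)) = h (int n)"
proof (induction n)
  case 0 then show ?case by simp
next
  case (Suc n)
  have hs: "h (int (Suc n)) = h (int n) \<oplus> \<one>"
    using h_add[of "int n" 1] h_one by (simp add: add.commute)
  have "phi (h (int (Suc n))) = phi (h (int n) \<oplus> \<one>)" using hs by simp
  also have "\<dots> = h (int n) \<oplus> \<one>" using Suc by (simp add: phi_add)
  finally show ?case using hs by simp
qed

lemma phi_h [simp]: "phi (h n) = h n"
proof (cases "n \<ge> 0")
  case True then show ?thesis using phi_h_nat[of "nat n"] by simp
next
  case False
  hence "n = - int (nat (- n))" by simp
  hence "h n = \<ominus> h (int (nat (-n)))" by (metis h_uminus)
  thus ?thesis using phi_h_nat[of "nat (-n)"] by (simp add: phi_uminus)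
qed

lemma phi_inj:
  assumes x: "x \<in> carrier L" and y: "y \<in> carrier L" and e: "phi x = phi y"
  shows "x = y"
proof -
  have "phi (x \<ominus> y) = \<zero>" using e x y by (simp add: phi_minus minus_eq_zero_iff)
  hence "x \<ominus> y = \<zero>" unfolding phi_def using pow_eq_zero[of "x \<ominus> y" p] x y p_gt3 by simp
  thus ?thesis using x y minus_eq_zero_iff by simp
qed

lemma h_inj_range:
  assumes "i < p" "j < p" "h (int i) = h (int j)"
  shows "i = j"
proof -
  have "h (int i - int j) = \<zero>" using assms(3) by (simp add: h_diff minus_eq_zero_iff)
  hence "int p dvd int i - int j" using h_zero_iff by simp
  then obtain k where k: "int i - int j = int p * k" by (auto elim: dvdE)
  have "k = 0"
  proof (rule ccontr)
    assume "k \<noteq> 0"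
    hence k1: "\<bar>k\<bar> \<ge> 1" by linarith
    have "\<bar>int p * k\<bar> = int p * \<bar>k\<bar>" by (simp add: abs_mult)
    also have "\<dots> \<ge> int p * 1" using k1 by (intro mult_left_mono) auto
    finally have "\<bar>int p * k\<bar> \<ge> int p" by simp
    thus False using k assms(1,2) by linarith
  qed
  thus ?thesis using k by simp
qed

lemma phi_fixed:
  assumes x: "x \<in> carrier L" and fx: "phi x = x"
  shows "\<exists>n. x = h n"
proof (rule ccontr)
  assume nx: "\<not> (\<exists>n. x = h n)"
  define P where "P = (\<one> # replicate (p - 2) \<zero>) @ [\<ominus> \<one>, \<zero>]"
  have PC: "P \<in> carrier (poly_ring L)"
    unfolding P_def univ_poly_def polynomial_def by auto
  have degP: "Polynomials.degree P = p" unfolding P_def using p_gt3 by simp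
  have evP: "eval P y = phi y \<ominus> y" if y: "y \<in> carrier L" for y
  proof -
    have e1: "eval (\<one> # replicate (p - 2) \<zero>) y = y [^] (p - 2)"
      using y eval_replicate[of "[]" y "p - 2"] by simp
    have "eval P y = y [^] (p - 2) \<otimes> y [^] (2::nat) \<oplus> eval [\<ominus> \<one>, \<zero>] y"
      unfolding P_def using y e1 by (subst eval_append) (auto simp: numeral_2_eq_2)
    also have "y [^] (p - 2) \<otimes> y [^] (2::nat) = phi y"
    proof -
      have pp: "p - 2 + 2 = p" using p_gt3 by simp
      show ?thesis unfolding phi_def by (metis nat_pow_mult[OF y] pp)
    qed
    also have "eval [\<ominus> \<one>, \<zero>] y = \<ominus> y" using y by (simp add: l_minus)
    finally show ?thesis by (simp add: a_minus_def)
  qed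
  define S where "S = insert x (h ` int ` {..<p})"
  have Sroots: "S \<subseteq> set_mset (roots P)"
  proof
    fix y assume "y \<in> S"
    hence yc: "y \<in> carrier L" and "phi y = y" unfolding S_def using x fx by auto
    hence "eval P y = \<zero>" using evP by (simp add: minus_eq_zero_iff)
    hence "is_root P y" unfolding is_root_def P_def using yc by auto
    thus "y \<in> set_mset (roots P)" using roots_mem_iff_is_root[OF PC] by auto
  qed
  have "card (h ` int ` {..<p}) = p"
  proof -
    have "inj_on (\<lambda>i. h (int i)) {..<p}" using h_inj_range by (auto simp: inj_on_def)
    hence "card ((\<lambda>i. h (int i)) ` {..<p}) = p" by (simp add: card_image)
    thus ?thesis by (simp add: image_image)
  qed
  moreover have "x \<notin> h ` int ` {..<p}" using nx by auto
  ultimately have cS: "card S = Suc p" unfolding S_def by simp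
  have "card S \<le> card (set_mset (roots P))" using Sroots by (intro card_mono) auto
  also have "card (set_mset (roots P)) = size (mset_set (set_mset (roots P)))" by simp
  also have "\<dots> \<le> size (roots P)" by (intro size_mset_mono mset_set_set_mset_msubset)
  also have "\<dots> \<le> p" using size_roots_le_degree[OF PC] degP by simp
  finally show False using cS by simp
qed

end




context cring
begin

definition Ev :: "('c::comm_ring_1 \<Rightarrow> 'a) \<Rightarrow> 'a \<Rightarrow> 'c poly \<Rightarrow> 'a" where
  "Ev f x p = foldr (\<lambda>a acc. f a \<oplus> x \<otimes> acc) (coeffs p) \<zero>"

definition ishom :: "('c::comm_ring_1 \<Rightarrow> 'a) \<Rightarrow> bool" where
  "ishom f \<longleftrightarrow> (\<forall>a. f a \<in> carrier R) \<and> (\<forall>a b. f (a + b) = f a \<oplus> f b) \<and>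
     (\<forall>a b. f (a * b) = f a \<otimes> f b) \<and> f 1 = \<one>"

lemma ishomD:
  assumes "ishom f"
  shows "f a \<in> carrier R" "f (a + b) = f a \<oplus> f b" "f (a * b) = f a \<otimes> f b" "f 1 = \<one>"
  using assms unfolding ishom_def by auto

lemma hom_zero: assumes "ishom f" shows "f 0 = \<zero>"
proof -
  have "f 0 = f 0 \<oplus> f 0" using ishomD(2)[OF assms, of 0 0] by simp
  thus ?thesis using ishomD(1)[OF assms] by simp
qed

lemma hom_uminus: assumes "ishom f" shows "f (- a) = \<ominus> f a"
proof -
  have "f (- a) \<oplus> f a = \<zero>" using ishomD(2)[OF assms, of "-a" a] hom_zero[OF assms] by simp
  thus ?thesis using ishomD(1)[OF assms] by (intro minus_equality[symmetric]) auto
qed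

lemma hom_diff: assumes "ishom f" shows "f (a - b) = f a \<ominus> f b"
  using ishomD(2)[OF assms, of a "-b"] hom_uminus[OF assms, of b] by (simp add: a_minus_def)

lemma hom_pow: assumes "ishom f" shows "f (a ^ n) = f a [^] n"
  by (induction n) (simp_all add: ishomD[OF assms] m_comm[of "f a"])

lemma hom_numeral_One: assumes "ishom f" shows "f (numeral Num.One) = \<one>"
  using ishomD(4)[OF assms] by simp
lemma hom_numeral_Bit0: assumes "ishom f" shows "f (numeral (Num.Bit0 k)) = f (numeral k) \<oplus> f (numeral k)"
  by (simp only: numeral_Bit0 ishomD(2)[OF assms])
lemma hom_numeral_Bit1: assumes "ishom f" shows "f (numeral (Num.Bit1 k)) = f (numeral k) \<oplus> f (numeral k) \<oplus> \<one>"
  by (simp only: numeral_Bit1 ishomD(2)[OF assms] ishomD(4)[OF assms])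

lemmas hom_simps = ishomD(1,2,3,4) hom_zero hom_uminus hom_diff hom_pow hom_numeral_One hom_numeral_Bit0 hom_numeral_Bit1

lemma Ev_0 [simp]: "Ev f x 0 = \<zero>" unfolding Ev_def by simp

lemma Ev_pCons:
  assumes f0: "f 0 = \<zero>" and x: "x \<in> carrier R"
  shows "Ev f x (pCons a p) = f a \<oplus> x \<otimes> Ev f x p"
proof (cases "p = 0 \<and> a = 0")
  case True then show ?thesis using f0 x by (simp add: Ev_def)
next
  case False
  then show ?thesis unfolding Ev_def by (auto simp: cCons_def)
qed

lemma Ev_carrier:
  assumes f: "ishom f" and x: "x \<in> carrier R"
  shows "Ev f x p \<in> carrier R"
  by (induction p) (simp_all add: Ev_pCons hom_zero[OF f] x ishomD(1)[OF f])

lemma Ev_add: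
  assumes f: "ishom f" and x: "x \<in> carrier R"
  shows "Ev f x (p + q) = Ev f x p \<oplus> Ev f x q"
proof (induction p arbitrary: q)
  case 0 then show ?case using Ev_carrier[OF f x] by simp
next
  case (pCons a p)
  show ?case
  proof (cases q)
    case (pCons b q')
    have "Ev f x (pCons a p + q) = f (a + b) \<oplus> x \<otimes> Ev f x (p + q')"
      using pCons by (simp add: Ev_pCons hom_zero[OF f] x)
    also have "\<dots> = (f a \<oplus> x \<otimes> Ev f x p) \<oplus> (f b \<oplus> x \<otimes> Ev f x q')"
      using pCons.IH ishomD[OF f] x Ev_carrier[OF f x]
      by (simp add: r_distr a_ac)
    finally show ?thesis using pCons by (simp add: Ev_pCons hom_zero[OF f] x)
  qed
qed

lemma Ev_smult:
  assumes f: "ishom f" and x: "x \<in> carrier R"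
  shows "Ev f x (smult a q) = f a \<otimes> Ev f x q"
proof (induction q)
  case 0 then show ?case using ishomD(1)[OF f] by simp
next
  case (pCons b q)
  have "Ev f x (smult a (pCons b q)) = f (a * b) \<oplus> x \<otimes> (f a \<otimes> Ev f x q)"
    using pCons by (simp add: Ev_pCons hom_zero[OF f] x)
  also have "\<dots> = f a \<otimes> (f b \<oplus> x \<otimes> Ev f x q)"
    using ishomD[OF f] x Ev_carrier[OF f x] by (simp add: r_distr m_lcomm)
  finally show ?case by (simp add: Ev_pCons hom_zero[OF f] x)
qed

lemma Ev_mult:
  assumes f: "ishom f" and x: "x \<in> carrier R"
  shows "Ev f x (p * q) = Ev f x p \<otimes> Ev f x q"
proof (induction p)
  case 0 then show ?case using Ev_carrier[OF f x] by simp
next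
  case (pCons a p)
  have "Ev f x (pCons a p * q) = f a \<otimes> Ev f x q \<oplus> x \<otimes> (Ev f x p \<otimes> Ev f x q)"
    using pCons by (simp add: Ev_pCons hom_zero[OF f] x Ev_add[OF f x] Ev_smult[OF f x] Ev_carrier[OF f x] ishomD(1)[OF f])
  also have "\<dots> = (f a \<oplus> x \<otimes> Ev f x p) \<otimes> Ev f x q"
    using ishomD[OF f] x Ev_carrier[OF f x] by (simp add: l_distr m_assoc)
  finally show ?case by (simp add: Ev_pCons hom_zero[OF f] x)
qed

lemma Ev_one: assumes f: "ishom f" and x: "x \<in> carrier R" shows "Ev f x 1 = \<one>"
proof -
  have "Ev f x (pCons 1 0) = f 1 \<oplus> x \<otimes> Ev f x 0" by (rule Ev_pCons[where f=f, OF hom_zero[OF f] x])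
  thus ?thesis using ishomD[OF f] x by (simp add: one_pCons)
qed

lemma ishom_Ev: assumes f: "ishom f" and x: "x \<in> carrier R" shows "ishom (Ev f x)"
  unfolding ishom_def using Ev_carrier[OF f x] Ev_add[OF f x] Ev_mult[OF f x] Ev_one[OF f x] by blast

lemma Ev_X: assumes f: "ishom f" and x: "x \<in> carrier R" shows "Ev f x [:0, 1:] = x"
  using ishomD[OF f] x by (simp add: Ev_pCons hom_zero[OF f])

lemma Ev_const: assumes f: "ishom f" and x: "x \<in> carrier R" shows "Ev f x [:c:] = f c"
  using ishomD[OF f] x by (simp add: Ev_pCons hom_zero[OF f])

lemma Ev_of_int: assumes f: "ishom f" and x: "x \<in> carrier R" shows "Ev f x (of_int n) = f (of_int n)"
  by (simp add: of_int_poly Ev_const[OF f x])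

end




definition "w4 x y z = -(x+y+z)"
definition "pe x y z = x*y + x*z + x*w4 x y z + y*z + y*w4 x y z + z*w4 x y z"
definition "qe x y z = -(x*y*z + x*y*w4 x y z + x*z*w4 x y z + y*z*w4 x y z)"
definition "re x y z = x*y*z*w4 x y z"

lemma R1: fixes x y z :: "'b::idom" shows "pe x y z = -(z*z + (x+y)*z + (x*x+x*y+y*y))"
  unfolding pe_def w4_def by Groebner_Basis.algebra
lemma R2: fixes x y z :: "'b::idom" shows "qe x y z = -(y*y*y + x*y*y + (x*x + pe x y z)*y + (x*x*x + pe x y z * x))"
  unfolding qe_def pe_def w4_def by Groebner_Basis.algebra
lemma R3: fixes x y z :: "'b::idom" shows "re x y z = -(x*x*x*x + pe x y z*x*x + qe x y z*x)"
  unfolding re_def qe_def pe_def w4_def by Groebner_Basis.algebra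

definition V1 :: "int poly poly poly" where "V1 = [:[:[:0,1:]:]:]"
definition V2 :: "int poly poly poly" where "V2 = [:[:0,1:]:]"
definition V3 :: "int poly poly poly" where "V3 = [:0,1:]"
definition W1 :: "int poly poly poly poly" where "W1 = [:V1:]"
definition W2 :: "int poly poly poly poly" where "W2 = [:V2:]"
definition W3 :: "int poly poly poly poly" where "W3 = [:V3:]"
definition W4 :: "int poly poly poly poly" where "W4 = [:0,1:]"

lemma (in cring) eval_quad:
  assumes "b \<in> carrier R" "c \<in> carrier R" "x \<in> carrier R"
  shows "eval [\<one>, b, c] x = x \<otimes> x \<oplus> b \<otimes> x \<oplus> c"
  using assms by (simp add: numeral_2_eq_2 a_assoc)

lemma (in cring) eval_cubic:
  assumes "b \<in> carrier R" "c \<in> carrier R" "d \<in> carrier R" "x \<in> carrier R"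
  shows "eval [\<one>, b, c, d] x = x \<otimes> x \<otimes> x \<oplus> b \<otimes> x \<otimes> x \<oplus> c \<otimes> x \<oplus> d"
  using assms by (simp add: numeral_eq_Suc a_assoc m_assoc)

lemma (in cring) eval_quartic:
  assumes "b \<in> carrier R" "c \<in> carrier R" "d \<in> carrier R" "e \<in> carrier R" "x \<in> carrier R"
  shows "eval [\<one>, b, c, d, e] x = x \<otimes> x \<otimes> x \<otimes> x \<oplus> b \<otimes> x \<otimes> x \<otimes> x \<oplus> c \<otimes> x \<otimes> x \<oplus> d \<otimes> x \<oplus> e"
  using assms by (simp add: numeral_eq_Suc a_assoc m_assoc)

lemma (in cring) solve_add:
  assumes "u \<in> carrier R" "v \<in> carrier R" "u \<oplus> v = \<zero>"
  shows "v = \<ominus> u"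
  using assms by (metis add.inv_equality a_comm)

context frob
begin

lemma ishom_h: "ishom h"
  unfolding ishom_def using h_add h_mult h_one by auto

definition G3 :: "'a \<Rightarrow> 'a \<Rightarrow> 'a \<Rightarrow> int poly poly poly \<Rightarrow> 'a" where
  "G3 x y z = Ev (Ev (Ev h x) y) z"
definition G4 :: "'a \<Rightarrow> 'a \<Rightarrow> 'a \<Rightarrow> 'a \<Rightarrow> int poly poly poly poly \<Rightarrow> 'a" where
  "G4 x y z t = Ev (G3 x y z) t"

lemma ishom_1: "x \<in> carrier L \<Longrightarrow> ishom (Ev h x)"
  using ishom_Ev[OF ishom_h] .
lemma ishom_2: "x \<in> carrier L \<Longrightarrow> y \<in> carrier L \<Longrightarrow> ishom (Ev (Ev h x) y)"
  using ishom_Ev[OF ishom_1] .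
lemma ishom_G3: "x \<in> carrier L \<Longrightarrow> y \<in> carrier L \<Longrightarrow> z \<in> carrier L \<Longrightarrow> ishom (G3 x y z)"
  unfolding G3_def using ishom_Ev[OF ishom_2] .
lemma ishom_G4: "x \<in> carrier L \<Longrightarrow> y \<in> carrier L \<Longrightarrow> z \<in> carrier L \<Longrightarrow> t \<in> carrier L \<Longrightarrow> ishom (G4 x y z t)"
  unfolding G4_def using ishom_Ev[OF ishom_G3] .

context
  fixes x y z
  assumes xyz: "x \<in> carrier L" "y \<in> carrier L" "z \<in> carrier L"
begin

lemma G3_V1 [simp]: "G3 x y z V1 = x"
  unfolding G3_def V1_def using xyz
  by (simp add: Ev_const[OF ishom_2] Ev_const[OF ishom_1] Ev_X[OF ishom_h])
lemma G3_V2 [simp]: "G3 x y z V2 = y"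
  unfolding G3_def V2_def using xyz
  by (simp add: Ev_const[OF ishom_2] Ev_X[OF ishom_1])
lemma G3_V3 [simp]: "G3 x y z V3 = z"
  unfolding G3_def V3_def using xyz
  by (simp add: Ev_X[OF ishom_2])
lemma G3_of_int [simp]: "G3 x y z (of_int n) = h n"
  unfolding G3_def using xyz
  by (simp add: Ev_of_int[OF ishom_2] Ev_of_int[OF ishom_1] Ev_of_int[OF ishom_h])
end

context
  fixes x y z t
  assumes xyz: "x \<in> carrier L" "y \<in> carrier L" "z \<in> carrier L" "t \<in> carrier L"
begin

lemma G4_W1 [simp]: "G4 x y z t W1 = x"
  unfolding G4_def W1_def using xyz by (simp add: Ev_const[OF ishom_G3])
lemma G4_W2 [simp]: "G4 x y z t W2 = y"
  unfolding G4_def W2_def using xyz by (simp add: Ev_const[OF ishom_G3])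
lemma G4_W3 [simp]: "G4 x y z t W3 = z"
  unfolding G4_def W3_def using xyz by (simp add: Ev_const[OF ishom_G3])
lemma G4_W4 [simp]: "G4 x y z t W4 = t"
  unfolding G4_def W4_def using xyz by (simp add: Ev_X[OF ishom_G3])
lemma G4_of_int [simp]: "G4 x y z t (of_int n) = h n"
  unfolding G4_def using xyz by (simp add: Ev_of_int[OF ishom_G3])
lemma G4_const: "G4 x y z t [:q:] = G3 x y z q"
  unfolding G4_def using xyz by (simp add: Ev_const[OF ishom_G3])

end

lemma quartic_split:
  fixes a c d e :: int
  assumes pa: "\<not> int p dvd a"
  obtains x y z where "x \<in> carrier L" "y \<in> carrier L" "z \<in> carrier L"
    "h c = G3 x y z (of_int a * pe V1 V2 V3)"
    "h d = G3 x y z (of_int a * qe V1 V2 V3)"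
    "h e = G3 x y z (of_int a * re V1 V2 V3)"
proof -
  have A0: "h a \<noteq> \<zero>" using pa h_zero_iff by simp
  hence Au: "h a \<in> Units L" using field_Units by auto
  define P where "P = inv (h a) \<otimes> h c"
  define Q where "Q = inv (h a) \<otimes> h d"
  define R where "R = inv (h a) \<otimes> h e"
  have PQR: "P \<in> carrier L" "Q \<in> carrier L" "R \<in> carrier L" unfolding P_def Q_def R_def using Au by auto
  have hc: "h c = h a \<otimes> P" unfolding P_def using Au by (simp add: m_assoc[symmetric] Units_r_inv)
  have hd: "h d = h a \<otimes> Q" unfolding Q_def using Au by (simp add: m_assoc[symmetric] Units_r_inv)
  have he: "h e = h a \<otimes> R" unfolding R_def using Au by (simp add: m_assoc[symmetric] Units_r_inv)
  obtain x where x: "x \<in> carrier L" and ex: "eval [\<one>, \<zero>, P, Q, R] x = \<zero>"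
    using monic_root[of "[\<zero>, P, Q, R]"] PQR by auto
  obtain y where y: "y \<in> carrier L" and ey: "eval [\<one>, x, x \<otimes> x \<oplus> P, x \<otimes> x \<otimes> x \<oplus> P \<otimes> x \<oplus> Q] y = \<zero>"
    using monic_root[of "[x, x \<otimes> x \<oplus> P, x \<otimes> x \<otimes> x \<oplus> P \<otimes> x \<oplus> Q]"] PQR x by auto
  obtain z where z: "z \<in> carrier L" and ez: "eval [\<one>, x \<oplus> y, x \<otimes> x \<oplus> x \<otimes> y \<oplus> y \<otimes> y \<oplus> P] z = \<zero>"
    using monic_root[of "[x \<oplus> y, x \<otimes> x \<oplus> x \<otimes> y \<oplus> y \<otimes> y \<oplus> P]"] PQR x y by auto
  have gh: "ishom (G3 x y z)" using ishom_G3 x y z .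
  note hs = hom_simps[OF gh] G3_V1[OF x y z] G3_V2[OF x y z] G3_V3[OF x y z] x y z
  have Pe: "P = G3 x y z (pe V1 V2 V3)"
  proof -
    have "(z \<otimes> z \<oplus> (x \<oplus> y) \<otimes> z \<oplus> (x \<otimes> x \<oplus> x \<otimes> y \<oplus> y \<otimes> y)) \<oplus> P = \<zero>"
      using ez x y z PQR by (simp add: eval_quad a_assoc)
    hence "P = \<ominus> (z \<otimes> z \<oplus> (x \<oplus> y) \<otimes> z \<oplus> (x \<otimes> x \<oplus> x \<otimes> y \<oplus> y \<otimes> y))"
      using x y z PQR by (intro solve_add) auto
    also have "\<dots> = G3 x y z (-(V3*V3 + (V1+V2)*V3 + (V1*V1+V1*V2+V2*V2)))"
      by (simp only: hs)
    also have "\<dots> = G3 x y z (pe V1 V2 V3)" by (simp only: R1[symmetric])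
    finally show ?thesis .
  qed
  have Qe: "Q = G3 x y z (qe V1 V2 V3)"
  proof -
    have "(y \<otimes> y \<otimes> y \<oplus> x \<otimes> y \<otimes> y \<oplus> (x \<otimes> x \<oplus> P) \<otimes> y \<oplus> (x \<otimes> x \<otimes> x \<oplus> P \<otimes> x)) \<oplus> Q = \<zero>"
      using ey x y z PQR by (simp add: eval_cubic a_assoc m_assoc)
    hence "Q = \<ominus> (y \<otimes> y \<otimes> y \<oplus> x \<otimes> y \<otimes> y \<oplus> (x \<otimes> x \<oplus> P) \<otimes> y \<oplus> (x \<otimes> x \<otimes> x \<oplus> P \<otimes> x))"
      using x y z PQR by (intro solve_add) auto
    also have "\<dots> = G3 x y z (-(V2*V2*V2 + V1*V2*V2 + (V1*V1 + pe V1 V2 V3)*V2 + (V1*V1*V1 + pe V1 V2 V3 * V1)))"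
      unfolding Pe by (simp only: hs)
    also have "\<dots> = G3 x y z (qe V1 V2 V3)" by (simp only: R2[symmetric])
    finally show ?thesis .
  qed
  have Re: "R = G3 x y z (re V1 V2 V3)"
  proof -
    have "(x \<otimes> x \<otimes> x \<otimes> x \<oplus> P \<otimes> x \<otimes> x \<oplus> Q \<otimes> x) \<oplus> R = \<zero>"
      using ex x y z PQR by (simp add: eval_quartic a_assoc m_assoc)
    hence "R = \<ominus> (x \<otimes> x \<otimes> x \<otimes> x \<oplus> P \<otimes> x \<otimes> x \<oplus> Q \<otimes> x)"
      using x y z PQR by (intro solve_add) auto
    also have "\<dots> = G3 x y z (-(V1*V1*V1*V1 + pe V1 V2 V3*V1*V1 + qe V1 V2 V3*V1))"
      unfolding Pe Qe by (simp only: hs)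
    also have "\<dots> = G3 x y z (re V1 V2 V3)" by (simp only: R3[symmetric])
    finally show ?thesis .
  qed
  show ?thesis
    apply (rule that[OF x y z])
    using hc hd he Pe Qe Re hs x y z by simp_all
qed

end




lemma const_hom_w4: "w4 [:a:] [:b:] [:c:] = [:w4 a b c:]"
  unfolding w4_def by simp
lemma const_hom_pe: "pe [:a:] [:b:] [:c:] = [:pe a b c:]"
  unfolding pe_def const_hom_w4 by (simp add: ac_simps)
lemma const_hom_qe: "qe [:a:] [:b:] [:c:] = [:qe a b c:]"
  unfolding qe_def const_hom_w4 by (simp add: ac_simps)
lemma const_hom_re: "re [:a:] [:b:] [:c:] = [:re a b c:]"
  unfolding re_def const_hom_w4 by (simp add: ac_simps)

lemma Fid: fixes x y z t :: "'b::idom" shows "t^4 + pe x y z*t^2 + qe x y z*t + re x y z = (t-x)*(t-y)*(t-z)*(t-w4 x y z)"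
  unfolding re_def qe_def pe_def w4_def by Groebner_Basis.algebra

context frob begin

lemma fac3:
  assumes u: "u1 \<in> carrier L" "u2 \<in> carrier L" "u3 \<in> carrier L" and v: "v \<in> carrier L"
  shows "v [^] (3::nat) \<ominus> (u1 \<oplus> u2 \<oplus> u3) \<otimes> v [^] (2::nat) \<oplus> (u1 \<otimes> u2 \<oplus> u1 \<otimes> u3 \<oplus> u2 \<otimes> u3) \<otimes> v \<ominus> u1 \<otimes> u2 \<otimes> u3
     = (v \<ominus> u1) \<otimes> (v \<ominus> u2) \<otimes> (v \<ominus> u3)"
proof -
  have h4: "ishom (G4 u1 u2 u3 v)" using ishom_G4[OF u v] .
  note G4s = hom_simps[OF h4] G4_W1[OF u v] G4_W2[OF u v] G4_W3[OF u v] G4_W4[OF u v]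
  have "G4 u1 u2 u3 v (W4^3 - (W1+W2+W3)*W4^2 + (W1*W2+W1*W3+W2*W3)*W4 - W1*W2*W3) = G4 u1 u2 u3 v ((W4-W1)*(W4-W2)*(W4-W3))"
    by (rule arg_cong[where f="G4 u1 u2 u3 v"]) Groebner_Basis.algebra
  thus ?thesis by (simp only: G4s)
qed

lemma prod3_zero:
  assumes "u1 \<in> carrier L" "u2 \<in> carrier L" "u3 \<in> carrier L" "v \<in> carrier L"
  shows "(v \<ominus> u1) \<otimes> (v \<ominus> u2) \<otimes> (v \<ominus> u3) = \<zero> \<longleftrightarrow> v = u1 \<or> v = u2 \<or> v = u3"
  using assms by (simp add: integral_iff minus_eq_zero_iff)

end

lemma (in ring) add_lcancel:
  assumes "u \<in> carrier R" "v \<in> carrier R" "w \<in> carrier R"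
  shows "u \<oplus> v = u \<oplus> w \<longleftrightarrow> v = w"
proof
  assume "u \<oplus> v = u \<oplus> w"
  hence "\<ominus> u \<oplus> (u \<oplus> v) = \<ominus> u \<oplus> (u \<oplus> w)" by simp
  thus "v = w" using assms by (simp add: a_assoc[symmetric] l_neg)
qed simp

context frob begin

lemma case2_core:
  assumes u: "u1 \<in> carrier L" "u2 \<in> carrier L" "u3 \<in> carrier L"
    and f1: "phi u1 = u1"
    and s1: "phi (u1 \<oplus> u2 \<oplus> u3) = u1 \<oplus> u2 \<oplus> u3"
    and s2: "phi (u1 \<otimes> u2 \<oplus> u1 \<otimes> u3 \<oplus> u2 \<otimes> u3) = u1 \<otimes> u2 \<oplus> u1 \<otimes> u3 \<oplus> u2 \<otimes> u3"
    and S: "u1 \<otimes> phi u1 \<oplus> u2 \<otimes> phi u2 \<oplus> u3 \<otimes> phi u3 = u1 \<otimes> u2 \<oplus> u1 \<otimes> u3 \<oplus> u2 \<otimes> u3"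
    and I: "(u1 \<oplus> u2 \<oplus> u3) \<otimes> (u1 \<oplus> u2 \<oplus> u3) \<ominus> (\<one> \<oplus> \<one> \<oplus> \<one>) \<otimes> (u1 \<otimes> u2 \<oplus> u1 \<otimes> u3 \<oplus> u2 \<otimes> u3) \<noteq> \<zero>"
  shows False
proof -
  define w2 where "w2 = phi u2"
  define w3 where "w3 = phi u3"
  have w: "w2 \<in> carrier L" "w3 \<in> carrier L" unfolding w2_def w3_def using u by auto
  have "u1 \<oplus> (w2 \<oplus> w3) = u1 \<oplus> (u2 \<oplus> u3)"
    using s1 u f1 unfolding w2_def w3_def by (simp add: phi_add a_assoc)
  hence sum23: "w2 \<oplus> w3 = u2 \<oplus> u3" using add_lcancel u w by simp
  have "u1 \<otimes> w2 \<oplus> u1 \<otimes> w3 \<oplus> w2 \<otimes> w3 = u1 \<otimes> u2 \<oplus> u1 \<otimes> u3 \<oplus> u2 \<otimes> u3"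
    using s2 u f1 unfolding w2_def w3_def by (simp add: phi_add phi_mult)
  moreover have "u1 \<otimes> w2 \<oplus> u1 \<otimes> w3 = u1 \<otimes> u2 \<oplus> u1 \<otimes> u3"
    using sum23 u w by (simp add: r_distr[symmetric])
  ultimately have "(u1 \<otimes> u2 \<oplus> u1 \<otimes> u3) \<oplus> w2 \<otimes> w3 = (u1 \<otimes> u2 \<oplus> u1 \<otimes> u3) \<oplus> u2 \<otimes> u3" by simp
  hence prod23: "w2 \<otimes> w3 = u2 \<otimes> u3" using add_lcancel u w by simp
  have "(w2 \<ominus> u2) \<otimes> (w2 \<ominus> u3) = w2 \<otimes> w2 \<ominus> w2 \<otimes> (u2 \<oplus> u3) \<oplus> u2 \<otimes> u3"
    using u w by algebra
  also have "\<dots> = w2 \<otimes> w2 \<ominus> w2 \<otimes> (w2 \<oplus> w3) \<oplus> w2 \<otimes> w3" using sum23 prod23 by simp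
  also have "\<dots> = \<zero>" using u w by algebra
  finally have "w2 = u2 \<or> w2 = u3" using u w by (simp add: integral_iff minus_eq_zero_iff)
  thus False
  proof
    assume e2: "w2 = u2"
    hence e3: "w3 = u3" using sum23 add_lcancel u w by simp
    have S': "u1 \<otimes> u1 \<oplus> u2 \<otimes> u2 \<oplus> u3 \<otimes> u3 = u1 \<otimes> u2 \<oplus> u1 \<otimes> u3 \<oplus> u2 \<otimes> u3"
      using S f1 e2 e3 unfolding w2_def w3_def by simp
    have "(u1 \<oplus> u2 \<oplus> u3) \<otimes> (u1 \<oplus> u2 \<oplus> u3) \<ominus> (\<one> \<oplus> \<one> \<oplus> \<one>) \<otimes> (u1 \<otimes> u2 \<oplus> u1 \<otimes> u3 \<oplus> u2 \<otimes> u3)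
       = (u1 \<otimes> u1 \<oplus> u2 \<otimes> u2 \<oplus> u3 \<otimes> u3) \<ominus> (u1 \<otimes> u2 \<oplus> u1 \<otimes> u3 \<oplus> u2 \<otimes> u3)"
      using u by algebra
    also have "\<dots> = \<zero>" unfolding S' using u by (simp add: minus_eq_zero_iff)
    finally show False using I by simp
  next
    assume e2: "w2 = u3"
    hence e3: "w3 = u2" using sum23 add_lcancel[of u3 w3 u2] u w a_comm[of u2 u3] by simp
    have S': "u1 \<otimes> u1 \<oplus> u2 \<otimes> u3 \<oplus> u3 \<otimes> u2 = u1 \<otimes> u2 \<oplus> u1 \<otimes> u3 \<oplus> u2 \<otimes> u3"
      using S f1 e2 e3 unfolding w2_def w3_def by simp
    have "(u1 \<ominus> u2) \<otimes> (u1 \<ominus> u3) = (u1 \<otimes> u1 \<oplus> u2 \<otimes> u3 \<oplus> u3 \<otimes> u2) \<ominus> (u1 \<otimes> u2 \<oplus> u1 \<otimes> u3 \<oplus> u2 \<otimes> u3)"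
      using u by algebra
    also have "\<dots> = \<zero>" unfolding S' using u by (simp add: minus_eq_zero_iff)
    finally have "u1 = u2 \<or> u1 = u3" using u by (simp add: integral_iff minus_eq_zero_iff)
    hence all: "u2 = u1 \<and> u3 = u1"
    proof
      assume "u1 = u2"
      hence "w2 = u1" unfolding w2_def using f1 by simp
      thus ?thesis using e2 \<open>u1 = u2\<close> by simp
    next
      assume "u1 = u3"
      hence "w3 = u1" unfolding w3_def using f1 by simp
      thus ?thesis using e3 \<open>u1 = u3\<close> by simp
    qed
    have "(u1 \<oplus> u1 \<oplus> u1) \<otimes> (u1 \<oplus> u1 \<oplus> u1) \<ominus> (\<one> \<oplus> \<one> \<oplus> \<one>) \<otimes> (u1 \<otimes> u1 \<oplus> u1 \<otimes> u1 \<oplus> u1 \<otimes> u1) = \<zero>"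
      using u by algebra
    thus False using I all by simp
  qed
qed

lemma two_swap:
  assumes u: "u \<in> carrier L" "w \<in> carrier L" and fu: "phi u = w" and fw: "phi w = u"
    and s: "phi (u \<oplus> u \<oplus> w) = u \<oplus> u \<oplus> w"
  shows "u = w"
proof -
  have eq: "w \<oplus> w \<oplus> u = u \<oplus> u \<oplus> w" using s fu fw u by (simp add: phi_add)
  have dd: "(w \<oplus> w \<oplus> u) \<ominus> (u \<oplus> u \<oplus> w) = w \<ominus> u" using u by algebra
  have "(w \<oplus> w \<oplus> u) \<ominus> (u \<oplus> u \<oplus> w) = \<zero>" using eq u by (simp add: minus_eq_zero_iff)
  hence "w \<ominus> u = \<zero>" using dd by simp
  thus ?thesis using u minus_eq_zero_iff by simp
qed

end

locale frobq = frob +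
  fixes a b c d e :: int and x y z :: 'a
  assumes pb: "int p dvd b" and pa: "\<not> int p dvd a"
    and xc: "x \<in> carrier L" and yc: "y \<in> carrier L" and zc: "z \<in> carrier L"
    and hc0: "h c = G3 x y z (of_int a * pe V1 V2 V3)"
    and hd0: "h d = G3 x y z (of_int a * qe V1 V2 V3)"
    and he0: "h e = G3 x y z (of_int a * re V1 V2 V3)"
begin

abbreviation "G \<equiv> G3 x y z"
abbreviation "\<alpha>4 \<equiv> G3 x y z (w4 V1 V2 V3)"
abbreviation "Pv \<equiv> G3 x y z (pe V1 V2 V3)"
abbreviation "Qv \<equiv> G3 x y z (qe V1 V2 V3)"
abbreviation "Rv \<equiv> G3 x y z (re V1 V2 V3)"

lemma hG: "ishom G" using ishom_G3[OF xc yc zc] .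

lemmas Gs = hom_simps[OF hG] G3_V1[OF xc yc zc] G3_V2[OF xc yc zc] G3_V3[OF xc yc zc] G3_of_int[OF xc yc zc]

lemma hb: "h b = \<zero>" using pb h_zero_iff by simp
lemma ha0: "h a \<noteq> \<zero>" using pa h_zero_iff by simp
lemma hc: "h c = h a \<otimes> Pv" using hc0 by (simp only: Gs)
lemma hd: "h d = h a \<otimes> Qv" using hd0 by (simp only: Gs)
lemma he: "h e = h a \<otimes> Rv" using he0 by (simp only: Gs)

lemma a4c: "\<alpha>4 \<in> carrier L" using ishomD(1)[OF hG] .
lemma PQRc: "Pv \<in> carrier L" "Qv \<in> carrier L" "Rv \<in> carrier L" using ishomD(1)[OF hG] by auto

definition Q4 :: "'a \<Rightarrow> 'a" where
  "Q4 t = t [^] (4::nat) \<oplus> Pv \<otimes> t [^] (2::nat) \<oplus> Qv \<otimes> t \<oplus> Rv"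

lemma Q4_factor:
  assumes t: "t \<in> carrier L"
  shows "Q4 t = (t \<ominus> x) \<otimes> (t \<ominus> y) \<otimes> (t \<ominus> z) \<otimes> (t \<ominus> \<alpha>4)"
proof -
  have h4: "ishom (G4 x y z t)" using ishom_G4[OF xc yc zc t] .
  note G4s = hom_simps[OF h4] G4_W1[OF xc yc zc t] G4_W2[OF xc yc zc t] G4_W3[OF xc yc zc t] G4_W4[OF xc yc zc t]
  have cW: "pe W1 W2 W3 = [:pe V1 V2 V3:]" "qe W1 W2 W3 = [:qe V1 V2 V3:]" "re W1 W2 W3 = [:re V1 V2 V3:]" "w4 W1 W2 W3 = [:w4 V1 V2 V3:]"
    unfolding W1_def W2_def W3_def by (simp_all only: const_hom_pe const_hom_qe const_hom_re const_hom_w4)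
  have "G4 x y z t (W4^4 + pe W1 W2 W3*W4^2 + qe W1 W2 W3*W4 + re W1 W2 W3) = G4 x y z t ((W4-W1)*(W4-W2)*(W4-W3)*(W4-w4 W1 W2 W3))"
    by (simp only: Fid)
  thus ?thesis unfolding Q4_def by (simp only: G4s cW G4_const[OF xc yc zc t])
qed

lemma Q4_zero_iff:
  assumes t: "t \<in> carrier L"
  shows "Q4 t = \<zero> \<longleftrightarrow> t = x \<or> t = y \<or> t = z \<or> t = \<alpha>4"
  using Q4_factor[OF t] t xc yc zc a4c
  by (simp add: integral_iff minus_eq_zero_iff)


definition Zp :: "'a \<Rightarrow> 'a \<Rightarrow> 'a" where
  "Zp u v = h a \<otimes> h a \<otimes> (u \<oplus> v) \<otimes> (u \<oplus> v)"

lemma Zp_carrier [simp]: "u \<in> carrier L \<Longrightarrow> v \<in> carrier L \<Longrightarrow> Zp u v \<in> carrier L"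
  unfolding Zp_def by simp

lemma Zp_sym: "u \<in> carrier L \<Longrightarrow> v \<in> carrier L \<Longrightarrow> Zp u v = Zp v u"
  unfolding Zp_def by (simp add: a_comm)

abbreviation "A \<equiv> (of_int a :: int poly poly poly)"
abbreviation "zz1 \<equiv> Zp x y"
abbreviation "zz2 \<equiv> Zp x z"
abbreviation "zz3 \<equiv> Zp x \<alpha>4"

lemma zz1G: "zz1 = G (A*A*(V1+V2)*(V1+V2))" unfolding Zp_def by (simp only: Gs)
lemma zz2G: "zz2 = G (A*A*(V1+V3)*(V1+V3))" unfolding Zp_def by (simp only: Gs)
lemma zz3G: "zz3 = G (A*A*(V1+w4 V1 V2 V3)*(V1+w4 V1 V2 V3))" unfolding Zp_def by (simp only: Gs)

lemma pair1: "Zp z \<alpha>4 = zz1"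
proof -
  have "G (A*A*(V3+w4 V1 V2 V3)*(V3+w4 V1 V2 V3)) = G (A*A*(V1+V2)*(V1+V2))"
    by (rule arg_cong[where f=G]) (unfold w4_def, Groebner_Basis.algebra)
  thus ?thesis unfolding Zp_def by (simp only: Gs)
qed
lemma pair2: "Zp y \<alpha>4 = zz2"
proof -
  have "G (A*A*(V2+w4 V1 V2 V3)*(V2+w4 V1 V2 V3)) = G (A*A*(V1+V3)*(V1+V3))"
    by (rule arg_cong[where f=G]) (unfold w4_def, Groebner_Basis.algebra)
  thus ?thesis unfolding Zp_def by (simp only: Gs)
qed
lemma pair3: "Zp y z = zz3"
proof -
  have "G (A*A*(V2+V3)*(V2+V3)) = G (A*A*(V1+w4 V1 V2 V3)*(V1+w4 V1 V2 V3))"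
    by (rule arg_cong[where f=G]) (unfold w4_def, Groebner_Basis.algebra)
  thus ?thesis unfolding Zp_def by (simp only: Gs)
qed

lemma zdiff12: "zz1 \<ominus> zz2 = h a \<otimes> h a \<otimes> (y \<ominus> z) \<otimes> (x \<ominus> \<alpha>4)"
proof -
  have "G (A*A*(V1+V2)*(V1+V2) - A*A*(V1+V3)*(V1+V3)) = G (A*A*(V2-V3)*(V1-w4 V1 V2 V3))"
    by (rule arg_cong[where f=G]) (unfold w4_def, Groebner_Basis.algebra)
  thus ?thesis unfolding Zp_def by (simp only: Gs)
qed
lemma zdiff13: "zz1 \<ominus> zz3 = h a \<otimes> h a \<otimes> (y \<ominus> \<alpha>4) \<otimes> (x \<ominus> z)"
proof -
  have "G (A*A*(V1+V2)*(V1+V2) - A*A*(V1+w4 V1 V2 V3)*(V1+w4 V1 V2 V3)) = G (A*A*(V2-w4 V1 V2 V3)*(V1-V3))"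
    by (rule arg_cong[where f=G]) (unfold w4_def, Groebner_Basis.algebra)
  thus ?thesis unfolding Zp_def by (simp only: Gs)
qed
lemma zdiff23: "zz2 \<ominus> zz3 = h a \<otimes> h a \<otimes> (z \<ominus> \<alpha>4) \<otimes> (x \<ominus> y)"
proof -
  have "G (A*A*(V1+V3)*(V1+V3) - A*A*(V1+w4 V1 V2 V3)*(V1+w4 V1 V2 V3)) = G (A*A*(V3-w4 V1 V2 V3)*(V1-V2))"
    by (rule arg_cong[where f=G]) (unfold w4_def, Groebner_Basis.algebra)
  thus ?thesis unfolding Zp_def by (simp only: Gs)
qed

lemma e1: "zz1 \<oplus> zz2 \<oplus> zz3 = h (-2*a*c)"
proof -
  have "zz1 \<oplus> zz2 \<oplus> zz3 = G (A*A*(V1+V2)*(V1+V2) + A*A*(V1+V3)*(V1+V3) + A*A*(V1+w4 V1 V2 V3)*(V1+w4 V1 V2 V3))"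
    unfolding Zp_def by (simp only: Gs)
  also have "\<dots> = G (-2*A*(A*pe V1 V2 V3))"
    by (rule arg_cong[where f=G]) (unfold pe_def w4_def, Groebner_Basis.algebra)
  also have "\<dots> = h (-2*a*c)" by (simp only: Gs h_simps hc)
  finally show ?thesis .
qed

lemma e2: "zz1 \<otimes> zz2 \<oplus> zz1 \<otimes> zz3 \<oplus> zz2 \<otimes> zz3 = h (a^2*c^2 - 4*a^3*e)"
proof -
  have "zz1 \<otimes> zz2 \<oplus> zz1 \<otimes> zz3 \<oplus> zz2 \<otimes> zz3 = G ((A*A*(V1+V2)*(V1+V2))*(A*A*(V1+V3)*(V1+V3)) + (A*A*(V1+V2)*(V1+V2))*(A*A*(V1+w4 V1 V2 V3)*(V1+w4 V1 V2 V3)) + (A*A*(V1+V3)*(V1+V3))*(A*A*(V1+w4 V1 V2 V3)*(V1+w4 V1 V2 V3)))"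
    unfolding Zp_def by (simp only: Gs)
  also have "\<dots> = G (A^2*(A*pe V1 V2 V3)^2 - 4*A^3*(A*re V1 V2 V3))"
    by (rule arg_cong[where f=G]) (unfold pe_def re_def w4_def, Groebner_Basis.algebra)
  also have "\<dots> = h (a^2*c^2 - 4*a^3*e)" by (simp only: Gs h_simps hc he)
  finally show ?thesis .
qed

lemma e3: "zz1 \<otimes> zz2 \<otimes> zz3 = h (a^4*d^2)"
proof -
  have "zz1 \<otimes> zz2 \<otimes> zz3 = G ((A*A*(V1+V2)*(V1+V2))*(A*A*(V1+V3)*(V1+V3))*(A*A*(V1+w4 V1 V2 V3)*(V1+w4 V1 V2 V3)))"
    unfolding Zp_def by (simp only: Gs)
  also have "\<dots> = G (A^4*(A*qe V1 V2 V3)^2)"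
    by (rule arg_cong[where f=G]) (unfold qe_def w4_def, Groebner_Basis.algebra)
  also have "\<dots> = h (a^4*d^2)" by (simp only: Gs h_simps hd)
  finally show ?thesis .
qed

lemma sq: "zz1 [^] (2::nat) \<oplus> zz2 [^] (2::nat) \<oplus> zz3 [^] (2::nat) = h (2*a^2*c^2 + 8*a^3*e)"
proof -
  have "zz1 [^] (2::nat) \<oplus> zz2 [^] (2::nat) \<oplus> zz3 [^] (2::nat) = G ((A*A*(V1+V2)*(V1+V2))^2 + (A*A*(V1+V3)*(V1+V3))^2 + (A*A*(V1+w4 V1 V2 V3)*(V1+w4 V1 V2 V3))^2)"
    unfolding Zp_def by (simp only: Gs)
  also have "\<dots> = G (2*A^2*(A*pe V1 V2 V3)^2 + 8*A^3*(A*re V1 V2 V3))"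
    by (rule arg_cong[where f=G]) (unfold pe_def re_def w4_def, Groebner_Basis.algebra)
  also have "\<dots> = h (2*a^2*c^2 + 8*a^3*e)" by (simp only: Gs h_simps hc he)
  finally show ?thesis .
qed



abbreviation "E1 \<equiv> h (-2*a*c)"
abbreviation "E2 \<equiv> h (a^2*c^2 - 4*a^3*e)"
abbreviation "E3 \<equiv> h (a^4*d^2)"

definition cub :: "'a \<Rightarrow> 'a" where
  "cub v = v [^] (3::nat) \<ominus> E1 \<otimes> v [^] (2::nat) \<oplus> E2 \<otimes> v \<ominus> E3"

lemma zzc: "zz1 \<in> carrier L" "zz2 \<in> carrier L" "zz3 \<in> carrier L"
  using xc yc zc a4c by auto

lemma cub_factor: "v \<in> carrier L \<Longrightarrow> cub v = (v \<ominus> zz1) \<otimes> (v \<ominus> zz2) \<otimes> (v \<ominus> zz3)"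
  unfolding cub_def using fac3[OF zzc] by (simp only: e1 e2 e3)

lemma cub_zero_iff: "v \<in> carrier L \<Longrightarrow> cub v = \<zero> \<longleftrightarrow> v = zz1 \<or> v = zz2 \<or> v = zz3"
  using cub_factor prod3_zero[OF zzc] by simp

lemma phi_cub: "v \<in> carrier L \<Longrightarrow> phi (cub v) = cub (phi v)"
  unfolding cub_def by (simp add: phi_add phi_mult phi_minus phi_pow)

lemma zz_perm: "v \<in> {zz1, zz2, zz3} \<Longrightarrow> phi v \<in> {zz1, zz2, zz3}"
proof -
  assume v: "v \<in> {zz1, zz2, zz3}"
  hence vc: "v \<in> carrier L" using zzc by auto
  have "cub v = \<zero>" using cub_zero_iff[OF vc] v by auto
  hence "cub (phi v) = \<zero>" using phi_cub[OF vc] by simp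
  thus ?thesis using cub_zero_iff[of "phi v"] vc by simp
qed

lemma cub_step:
  assumes v: "v \<in> carrier L" and cv: "cub v = \<zero>"
  shows "v [^] ((n::nat) + 3) = E1 \<otimes> v [^] (n + 2) \<ominus> E2 \<otimes> v [^] (n + 1) \<oplus> E3 \<otimes> v [^] n"
proof -
  have "v [^] n \<otimes> cub v = \<zero>" using cv v by (simp add: r_null)
  moreover have "v [^] n \<otimes> cub v = v [^] (n + 3) \<ominus> (E1 \<otimes> v [^] (n + 2) \<ominus> E2 \<otimes> v [^] (n + 1) \<oplus> E3 \<otimes> v [^] n)"
  proof -
    have e: "v [^] (n + 3) = v [^] n \<otimes> v [^] (3::nat)" "v [^] (n + 2) = v [^] n \<otimes> v [^] (2::nat)" "v [^] (n + 1) = v [^] n \<otimes> v"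
      using v by (metis nat_pow_mult nat_pow_closed, metis nat_pow_mult nat_pow_closed, simp)
    have cs: "E1 \<in> carrier L" "E2 \<in> carrier L" "E3 \<in> carrier L" "v [^] n \<in> carrier L"
      "v [^] (3::nat) \<in> carrier L" "v [^] (2::nat) \<in> carrier L" using v by auto
    show ?thesis unfolding e cub_def using v cs
      by algebra
  qed
  ultimately show ?thesis using v by (simp add: minus_eq_zero_iff)
qed

lemma s_rel: "h (s_seq a c d e n) = zz1 [^] n \<oplus> zz2 [^] n \<oplus> zz3 [^] n"
proof (induction n rule: less_induct)
  case (less n)
  show ?case
  proof (cases n)
    case 0 then show ?thesis using zzc by (simp add: h_simps)
  next
    case (Suc m) note m = this
    show ?thesis
    proof (cases m)
      case 0 then show ?thesis using m e1 zzc by simp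
    next
      case (Suc k) note k = this
      show ?thesis
      proof (cases k)
        case 0 then show ?thesis using m k sq by (simp add: numeral_2_eq_2)
      next
        case (Suc j)
        have n: "n = j + 3" using m k Suc by simp
        have IH: "h (s_seq a c d e (j + 2)) = zz1 [^] (j + 2) \<oplus> zz2 [^] (j + 2) \<oplus> zz3 [^] (j + 2)"
          "h (s_seq a c d e (j + 1)) = zz1 [^] (j + 1) \<oplus> zz2 [^] (j + 1) \<oplus> zz3 [^] (j + 1)"
          "h (s_seq a c d e j) = zz1 [^] j \<oplus> zz2 [^] j \<oplus> zz3 [^] j"
          using less n by auto
        have "h (s_seq a c d e n) = E1 \<otimes> h (s_seq a c d e (j + 2)) \<oplus> h (4*a^3*e - a^2*c^2) \<otimes> h (s_seq a c d e (j + 1)) \<oplus> E3 \<otimes> h (s_seq a c d e j)"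
        proof -
          have ee: "n = Suc (Suc (Suc j))" "j + 2 = Suc (Suc j)" "j + 1 = Suc j" using n by simp_all
          have sn: "s_seq a c d e n = -2*a*c * s_seq a c d e (j+2) + (4*a^3*e - a^2*c^2) * s_seq a c d e (j+1) + a^4*d^2 * s_seq a c d e j"
            unfolding ee by (simp only: s_seq.simps)
          show ?thesis by (simp only: sn h_add h_mult)
        qed
        also have "h (4*a^3*e - a^2*c^2) = \<ominus> E2"
          using h_uminus[of "a^2*c^2 - 4*a^3*e"] by simp
        finally have hs: "h (s_seq a c d e n) = E1 \<otimes> h (s_seq a c d e (j + 2)) \<oplus> \<ominus> E2 \<otimes> h (s_seq a c d e (j + 1)) \<oplus> E3 \<otimes> h (s_seq a c d e j)" .
        have c1: "cub zz1 = \<zero>" "cub zz2 = \<zero>" "cub zz3 = \<zero>" using cub_zero_iff zzc by auto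
        note st = cub_step[OF zzc(1) c1(1), of j] cub_step[OF zzc(2) c1(2), of j] cub_step[OF zzc(3) c1(3), of j]
        show ?thesis unfolding hs IH unfolding n st using zzc by (simp add: r_distr l_minus a_ac a_minus_def)
      qed
    qed
  qed
qed


definition qv :: "'a \<Rightarrow> 'a" where
  "qv t = h a \<otimes> t [^] (4::nat) \<oplus> h c \<otimes> t [^] (2::nat) \<oplus> h d \<otimes> t \<oplus> h e"

lemma qv_Q4: "t \<in> carrier L \<Longrightarrow> qv t = h a \<otimes> Q4 t"
  unfolding qv_def Q4_def hc hd he using PQRc by (simp add: r_distr m_assoc)

lemma phi_qv: "t \<in> carrier L \<Longrightarrow> phi (qv t) = qv (phi t)"
  unfolding qv_def by (simp add: phi_add phi_mult phi_pow)

lemma roots_c: "t \<in> {x, y, z, \<alpha>4} \<Longrightarrow> t \<in> carrier L"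
  using xc yc zc a4c by auto

lemma alpha_perm:
  assumes t: "t \<in> {x, y, z, \<alpha>4}"
  shows "phi t \<in> {x, y, z, \<alpha>4}"
proof -
  have tc: "t \<in> carrier L" using roots_c[OF t] .
  have "Q4 t = \<zero>" using Q4_zero_iff[OF tc] t by auto
  hence "qv t = \<zero>" using qv_Q4[OF tc] by simp
  hence "qv (phi t) = \<zero>" using phi_qv[OF tc] by simp
  hence "h a \<otimes> Q4 (phi t) = \<zero>" using qv_Q4[of "phi t"] tc by simp
  hence "Q4 (phi t) = \<zero>" using ha0 tc by (simp add: integral_iff Q4_def PQRc)
  thus ?thesis using Q4_zero_iff[of "phi t"] tc by simp
qed

lemma cub_h: "cub (h m) = h (m^3 - (-2*a*c)*m^2 + (a^2*c^2 - 4*a^3*e)*m - a^4*d^2)"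
  unfolding cub_def by (simp only: h_diff h_add h_mult h_pow)

lemma nofix_case1:
  assumes I: "int p dvd a^2*c^2 + 12*a^3*e" and J: "cubic_nonresidue p (8*a^3*c^3 + 27*a^4*d^2)"
    and v: "v \<in> {zz1, zz2, zz3}" and fv: "phi v = v"
  shows False
proof -
  have vc: "v \<in> carrier L" using v zzc by auto
  obtain m where m: "v = h m" using phi_fixed[OF vc fv] by blast
  have "cub v = \<zero>" using cub_zero_iff[OF vc] v by auto
  hence "h (m^3 - (-2*a*c)*m^2 + (a^2*c^2 - 4*a^3*e)*m - a^4*d^2) = \<zero>" using cub_h m by simp
  hence dv: "int p dvd m^3 - (-2*a*c)*m^2 + (a^2*c^2 - 4*a^3*e)*m - a^4*d^2" using h_zero_iff by simp
  have id: "(3*m + 2*a*c)^3 - (8*a^3*c^3 + 27*a^4*d^2) = 27 * (m^3 - (-2*a*c)*m^2 + (a^2*c^2 - 4*a^3*e)*m - a^4*d^2) + 9*m*(a^2*c^2 + 12*a^3*e)"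
    by (simp add: algebra_simps power2_eq_square power3_eq_cube power4_eq_xxxx)
  have "int p dvd (3*m + 2*a*c)^3 - (8*a^3*c^3 + 27*a^4*d^2)"
    unfolding id by (rule dvd_add[OF dvd_mult[OF dv, of 27] dvd_mult[OF I, of "9*m"]])
  hence "[(3*m + 2*a*c)^3 = 8*a^3*c^3 + 27*a^4*d^2] (mod int p)"
    by (simp add: cong_iff_dvd_diff)
  hence "cubic_residue p (8*a^3*c^3 + 27*a^4*d^2)" unfolding cubic_residue_def by blast
  thus False using J unfolding cubic_nonresidue_def by blast
qed

lemma e1_fixed: "phi (zz1 \<oplus> zz2 \<oplus> zz3) = zz1 \<oplus> zz2 \<oplus> zz3" unfolding e1 by simp
lemma e2_fixed: "phi (zz1 \<otimes> zz2 \<oplus> zz1 \<otimes> zz3 \<oplus> zz2 \<otimes> zz3) = zz1 \<otimes> zz2 \<oplus> zz1 \<otimes> zz3 \<oplus> zz2 \<otimes> zz3" unfolding e2 by simp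


lemma nofix_case2:
  assumes I: "\<not> int p dvd a^2*c^2 + 12*a^3*e"
    and S: "[s_seq a c d e (p + 1) = a^2*c^2 - 4*a^3*e] (mod int p)"
    and v: "v \<in> {zz1, zz2, zz3}" and fv: "phi v = v"
  shows False
proof -
  have hs: "h (s_seq a c d e (p + 1)) = E2"
  proof -
    have "int p dvd s_seq a c d e (p + 1) - (a^2*c^2 - 4*a^3*e)" using S by (simp add: cong_iff_dvd_diff)
    hence "h (s_seq a c d e (p + 1) - (a^2*c^2 - 4*a^3*e)) = \<zero>" using h_zero_iff by blast
    hence "h (s_seq a c d e (p + 1)) \<ominus> E2 = \<zero>" by (simp only: h_diff[of "s_seq a c d e (p + 1)" "a^2*c^2 - 4*a^3*e"])
    thus ?thesis using minus_eq_zero_iff[of "h (s_seq a c d e (p + 1))" E2] by simp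
  qed
  have pw: "w [^] (p + 1) = w \<otimes> phi w" if "w \<in> carrier L" for w
    unfolding phi_def using that by (simp add: m_comm)
  have Sz: "zz1 \<otimes> phi zz1 \<oplus> zz2 \<otimes> phi zz2 \<oplus> zz3 \<otimes> phi zz3 = zz1 \<otimes> zz2 \<oplus> zz1 \<otimes> zz3 \<oplus> zz2 \<otimes> zz3"
    using s_rel[of "p + 1"] hs e2 pw zzc by simp
  have Iz: "(zz1 \<oplus> zz2 \<oplus> zz3) \<otimes> (zz1 \<oplus> zz2 \<oplus> zz3) \<ominus> (\<one> \<oplus> \<one> \<oplus> \<one>) \<otimes> (zz1 \<otimes> zz2 \<oplus> zz1 \<otimes> zz3 \<oplus> zz2 \<otimes> zz3) \<noteq> \<zero>"
  proof -
    have "(zz1 \<oplus> zz2 \<oplus> zz3) \<otimes> (zz1 \<oplus> zz2 \<oplus> zz3) \<ominus> (\<one> \<oplus> \<one> \<oplus> \<one>) \<otimes> (zz1 \<otimes> zz2 \<oplus> zz1 \<otimes> zz3 \<oplus> zz2 \<otimes> zz3)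
      = h ((-2*a*c)*(-2*a*c) - 3*(a^2*c^2 - 4*a^3*e))"
      unfolding e1 e2 by (simp only: h_diff h_mult h_numeral_Bit1 h_numeral_One)
    also have "(-2*a*c)*(-2*a*c) - 3*(a^2*c^2 - 4*a^3*e) = a^2*c^2 + 12*a^3*e"
      by (simp add: algebra_simps power2_eq_square power3_eq_cube)
    finally show ?thesis using I h_zero_iff by simp
  qed
  have s1: "phi (zz1 \<oplus> zz2 \<oplus> zz3) = zz1 \<oplus> zz2 \<oplus> zz3" by (rule e1_fixed)
  have s2: "phi (zz1 \<otimes> zz2 \<oplus> zz1 \<otimes> zz3 \<oplus> zz2 \<otimes> zz3) = zz1 \<otimes> zz2 \<oplus> zz1 \<otimes> zz3 \<oplus> zz2 \<otimes> zz3" by (rule e2_fixed)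
  note zc = zzc
  from v consider "v = zz1" | "v = zz2" | "v = zz3" by blast
  then show False
  proof cases
    assume "v = zz1"
    thus False using case2_core[OF zc(1) zc(2) zc(3) _ s1 s2 Sz Iz] fv by simp
  next
    assume "v = zz2"
    have s1': "phi (zz2 \<oplus> zz1 \<oplus> zz3) = zz2 \<oplus> zz1 \<oplus> zz3" using s1 zc by (simp add: a_ac)
    have s2': "phi (zz2 \<otimes> zz1 \<oplus> zz2 \<otimes> zz3 \<oplus> zz1 \<otimes> zz3) = zz2 \<otimes> zz1 \<oplus> zz2 \<otimes> zz3 \<oplus> zz1 \<otimes> zz3"
      using s2 zc by (simp add: a_ac m_ac)
    have Sz': "zz2 \<otimes> phi zz2 \<oplus> zz1 \<otimes> phi zz1 \<oplus> zz3 \<otimes> phi zz3 = zz2 \<otimes> zz1 \<oplus> zz2 \<otimes> zz3 \<oplus> zz1 \<otimes> zz3"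
      using Sz zc by (simp add: a_ac m_ac)
    have Iz': "(zz2 \<oplus> zz1 \<oplus> zz3) \<otimes> (zz2 \<oplus> zz1 \<oplus> zz3) \<ominus> (\<one> \<oplus> \<one> \<oplus> \<one>) \<otimes> (zz2 \<otimes> zz1 \<oplus> zz2 \<otimes> zz3 \<oplus> zz1 \<otimes> zz3) \<noteq> \<zero>"
      using Iz zc by (simp add: a_ac m_ac)
    show False using case2_core[OF zc(2) zc(1) zc(3) _ s1' s2' Sz' Iz'] fv \<open>v = zz2\<close> by simp
  next
    assume "v = zz3"
    have s1': "phi (zz3 \<oplus> zz1 \<oplus> zz2) = zz3 \<oplus> zz1 \<oplus> zz2" using s1 zc by (simp add: a_ac)
    have s2': "phi (zz3 \<otimes> zz1 \<oplus> zz3 \<otimes> zz2 \<oplus> zz1 \<otimes> zz2) = zz3 \<otimes> zz1 \<oplus> zz3 \<otimes> zz2 \<oplus> zz1 \<otimes> zz2"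
      using s2 zc by (simp add: a_ac m_ac)
    have Sz': "zz3 \<otimes> phi zz3 \<oplus> zz1 \<otimes> phi zz1 \<oplus> zz2 \<otimes> phi zz2 = zz3 \<otimes> zz1 \<oplus> zz3 \<otimes> zz2 \<oplus> zz1 \<otimes> zz2"
      using Sz zc by (simp add: a_ac m_ac)
    have Iz': "(zz3 \<oplus> zz1 \<oplus> zz2) \<otimes> (zz3 \<oplus> zz1 \<oplus> zz2) \<ominus> (\<one> \<oplus> \<one> \<oplus> \<one>) \<otimes> (zz3 \<otimes> zz1 \<oplus> zz3 \<otimes> zz2 \<oplus> zz1 \<otimes> zz2) \<noteq> \<zero>"
      using Iz zc by (simp add: a_ac m_ac)
    show False using case2_core[OF zc(3) zc(1) zc(2) _ s1' s2' Sz' Iz'] fv \<open>v = zz3\<close> by simp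
  qed
qed

end




context frobq begin

lemma phi_Zp: "u \<in> carrier L \<Longrightarrow> v \<in> carrier L \<Longrightarrow> phi (Zp u v) = Zp (phi u) (phi v)"
  unfolding Zp_def by (simp add: phi_add phi_mult)

lemma zz_distinct:
  assumes nofix: "\<And>v. v \<in> {zz1, zz2, zz3} \<Longrightarrow> phi v \<noteq> v"
  shows "zz1 \<noteq> zz2" "zz1 \<noteq> zz3" "zz2 \<noteq> zz3"
proof -
  note zc = zzc
  have P1: "phi zz1 \<in> {zz1, zz2, zz3}" "phi zz2 \<in> {zz1, zz2, zz3}" "phi zz3 \<in> {zz1, zz2, zz3}"
    using zz_perm by auto
  have N: "phi zz1 \<noteq> zz1" "phi zz2 \<noteq> zz2" "phi zz3 \<noteq> zz3" using nofix by auto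
  show "zz1 \<noteq> zz2"
  proof
    assume eq: "zz1 = zz2"
    have f1: "phi zz1 = zz3" using P1(1) N(1) eq by auto
    hence ne: "zz3 \<noteq> zz1" using N(1) by auto
    have f3: "phi zz3 = zz1" using P1(3) N(3) eq by auto
    have "phi (zz1 \<oplus> zz1 \<oplus> zz3) = zz1 \<oplus> zz1 \<oplus> zz3" using e1_fixed eq by simp
    hence "zz1 = zz3" using two_swap[OF zc(1) zc(3) f1 f3] by simp
    thus False using ne by simp
  qed
  show "zz1 \<noteq> zz3"
  proof
    assume eq: "zz1 = zz3"
    have f1: "phi zz1 = zz2" using P1(1) N(1) eq by auto
    hence ne: "zz2 \<noteq> zz1" using N(1) by auto
    have f2: "phi zz2 = zz1" using P1(2) N(2) eq by auto
    have "phi (zz1 \<oplus> zz2 \<oplus> zz1) = zz1 \<oplus> zz2 \<oplus> zz1" using e1_fixed eq by simp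
    hence "phi (zz1 \<oplus> zz1 \<oplus> zz2) = zz1 \<oplus> zz1 \<oplus> zz2" using zc by (simp add: a_ac)
    hence "zz1 = zz2" using two_swap[OF zc(1) zc(2) f1 f2] by simp
    thus False using ne by simp
  qed
  show "zz2 \<noteq> zz3"
  proof
    assume eq: "zz2 = zz3"
    have f2: "phi zz2 = zz1" using P1(2) N(2) eq by auto
    hence ne: "zz1 \<noteq> zz2" using N(2) by auto
    have f1: "phi zz1 = zz2" using P1(1) N(1) eq by auto
    have "phi (zz1 \<oplus> zz2 \<oplus> zz2) = zz1 \<oplus> zz2 \<oplus> zz2" using e1_fixed eq by simp
    hence "phi (zz2 \<oplus> zz2 \<oplus> zz1) = zz2 \<oplus> zz2 \<oplus> zz1" using zc by (simp add: a_ac)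
    hence "zz2 = zz1" using two_swap[OF zc(2) zc(1) f2 f1] by simp
    thus False using ne by simp
  qed
qed

lemma fac_ne:
  assumes "u \<in> carrier L" "v \<in> carrier L" "s \<in> carrier L" "t \<in> carrier L"
    and "zA \<ominus> zB = h a \<otimes> h a \<otimes> (u \<ominus> v) \<otimes> (s \<ominus> t)" and "zA \<noteq> zB"
    and "zA \<in> carrier L" "zB \<in> carrier L"
  shows "u \<noteq> v" "s \<noteq> t"
proof -
  have "zA \<ominus> zB \<noteq> \<zero>" using assms(6-8) minus_eq_zero_iff by simp
  thus "u \<noteq> v" "s \<noteq> t" using assms(1-5) by (auto simp: r_neg a_minus_def)
qed

lemma alpha_distinct:
  assumes nofix: "\<And>v. v \<in> {zz1, zz2, zz3} \<Longrightarrow> phi v \<noteq> v"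
  shows "x \<noteq> y" "x \<noteq> z" "x \<noteq> \<alpha>4" "y \<noteq> z" "y \<noteq> \<alpha>4" "z \<noteq> \<alpha>4"
proof -
  note zd = zz_distinct[OF nofix]
  note c = xc yc zc a4c zzc
  show "y \<noteq> z" "x \<noteq> \<alpha>4" using fac_ne[OF yc zc xc a4c zdiff12 zd(1)] c by auto
  show "y \<noteq> \<alpha>4" "x \<noteq> z" using fac_ne[OF yc a4c xc zc zdiff13 zd(2)] c by auto
  show "z \<noteq> \<alpha>4" "x \<noteq> y" using fac_ne[OF zc a4c xc yc zdiff23 zd(3)] c by auto
qed


lemma pair_facts:
  "Zp y x = zz1" "Zp z \<alpha>4 = zz1" "Zp \<alpha>4 z = zz1"
  "Zp z x = zz2" "Zp y \<alpha>4 = zz2" "Zp \<alpha>4 y = zz2"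
  "Zp \<alpha>4 x = zz3" "Zp y z = zz3" "Zp z y = zz3"
  using pair1 pair2 pair3 Zp_sym xc yc zc a4c by metis+

lemma some_alpha_fixed:
  assumes nofix: "\<And>v. v \<in> {zz1, zz2, zz3} \<Longrightarrow> phi v \<noteq> v"
  shows "\<exists>t\<in>{x, y, z, \<alpha>4}. phi t = t"
proof (rule ccontr)
  assume "\<not> (\<exists>t\<in>{x, y, z, \<alpha>4}. phi t = t)"
  hence nf: "phi x \<noteq> x" "phi y \<noteq> y" "phi z \<noteq> z" "phi \<alpha>4 \<noteq> \<alpha>4" by auto
  note ad = alpha_distinct[OF nofix]
  note c = xc yc zc a4c
  define b1 where "b1 = phi x"
  define b2 where "b2 = phi y"
  define b3 where "b3 = phi z"
  define b4 where "b4 = phi \<alpha>4"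
  have m: "b1 \<in> {x, y, z, \<alpha>4}" "b2 \<in> {x, y, z, \<alpha>4}" "b3 \<in> {x, y, z, \<alpha>4}" "b4 \<in> {x, y, z, \<alpha>4}"
    unfolding b1_def b2_def b3_def b4_def using alpha_perm by auto
  have inj: "b1 \<noteq> b2" "b1 \<noteq> b3" "b1 \<noteq> b4" "b2 \<noteq> b3" "b2 \<noteq> b4" "b3 \<noteq> b4"
    unfolding b1_def b2_def b3_def b4_def using phi_inj c ad by metis+
  have nf': "b1 \<noteq> x" "b2 \<noteq> y" "b3 \<noteq> z" "b4 \<noteq> \<alpha>4" using nf unfolding b1_def b2_def b3_def b4_def by auto
  have f: "phi zz1 = Zp b1 b2" "phi zz2 = Zp b1 b3" "phi zz3 = Zp b1 b4"
    unfolding b1_def b2_def b3_def b4_def using phi_Zp c by auto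
  have "Zp b1 b2 = zz1 \<or> Zp b1 b3 = zz2 \<or> Zp b1 b4 = zz3"
    using m inj nf' ad by (auto simp: pair_facts)
  thus False using nofix f by auto
qed

lemma droot:
  fixes Vt Va Vb Vc :: "int poly poly poly"
  assumes hr: "h r = G Vt"
    and Tid: "4*A*Vt^3 + 3*0*Vt^2 + 2*(A*pe V1 V2 V3)*Vt + A*qe V1 V2 V3 = A*((Vt - Va)*(Vt - Vb)*(Vt - Vc))"
    and ne: "G Vt \<noteq> G Va" "G Vt \<noteq> G Vb" "G Vt \<noteq> G Vc"
  shows "\<not> int p dvd dqf a b c d r"
proof
  assume "int p dvd dqf a b c d r"
  hence z: "h (dqf a b c d r) = \<zero>" using h_zero_iff by simp
  have "h (dqf a b c d r) = G (4*A*Vt^3 + 3*0*Vt^2 + 2*(A*pe V1 V2 V3)*Vt + A*qe V1 V2 V3)"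
    unfolding dqf_def by (simp only: h_simps Gs hr hb hc hd)
  also have "\<dots> = h a \<otimes> ((G Vt \<ominus> G Va) \<otimes> (G Vt \<ominus> G Vb) \<otimes> (G Vt \<ominus> G Vc))"
    unfolding Tid by (simp only: Gs)
  finally have "h a \<otimes> ((G Vt \<ominus> G Va) \<otimes> (G Vt \<ominus> G Vb) \<otimes> (G Vt \<ominus> G Vc)) = \<zero>" using z by simp
  thus False using ha0 ne ishomD(1)[OF hG] by (simp add: integral_iff minus_eq_zero_iff)
qed

lemma qf_root: "h r \<in> {x, y, z, \<alpha>4} \<Longrightarrow> int p dvd qf a b c d e r"
proof -
  assume t: "h r \<in> {x, y, z, \<alpha>4}"
  have "h (qf a b c d e r) = qv (h r)"
    unfolding qf_def qv_def by (simp add: h_add h_mult h_pow hb)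
  also have "\<dots> = h a \<otimes> Q4 (h r)" using qv_Q4 by simp
  also have "Q4 (h r) = \<zero>" using Q4_zero_iff[of "h r"] t by auto
  finally have "h (qf a b c d e r) = \<zero>" by simp
  thus ?thesis using h_zero_iff by simp
qed

lemma simple_root:
  assumes nofix: "\<And>v. v \<in> {zz1, zz2, zz3} \<Longrightarrow> phi v \<noteq> v"
  shows "\<exists>r. int p dvd qf a b c d e r \<and> \<not> int p dvd dqf a b c d r"
proof -
  obtain t where t: "t \<in> {x, y, z, \<alpha>4}" and ft: "phi t = t" using some_alpha_fixed[OF nofix] by blast
  obtain r where r: "t = h r" using phi_fixed[OF roots_c[OF t] ft] by blast
  note ad = alpha_distinct[OF nofix]
  have G1: "G V1 = x" "G V2 = y" "G V3 = z" by (simp_all only: Gs)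
  have q: "int p dvd qf a b c d e r" using qf_root t r by simp
  have "\<not> int p dvd dqf a b c d r"
  proof -
    consider "t = x" | "t = y" | "t = z" | "t = \<alpha>4" using t by blast
    then show ?thesis
    proof cases
      case 1
      show ?thesis
      proof (rule droot[where Vt=V1 and Va=V2 and Vb=V3 and Vc="w4 V1 V2 V3"])
        show "h r = G V1" using 1 r G1 by simp
        show "4*A*V1^3 + 3*0*V1^2 + 2*(A*pe V1 V2 V3)*V1 + A*qe V1 V2 V3 = A*((V1 - V2)*(V1 - V3)*(V1 - w4 V1 V2 V3))"
          unfolding pe_def qe_def w4_def by Groebner_Basis.algebra
      qed (use ad G1 in auto)
    next
      case 2
      show ?thesis
      proof (rule droot[where Vt=V2 and Va=V1 and Vb=V3 and Vc="w4 V1 V2 V3"])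
        show "h r = G V2" using 2 r G1 by simp
        show "4*A*V2^3 + 3*0*V2^2 + 2*(A*pe V1 V2 V3)*V2 + A*qe V1 V2 V3 = A*((V2 - V1)*(V2 - V3)*(V2 - w4 V1 V2 V3))"
          unfolding pe_def qe_def w4_def by Groebner_Basis.algebra
      qed (use ad G1 in auto)
    next
      case 3
      show ?thesis
      proof (rule droot[where Vt=V3 and Va=V1 and Vb=V2 and Vc="w4 V1 V2 V3"])
        show "h r = G V3" using 3 r G1 by simp
        show "4*A*V3^3 + 3*0*V3^2 + 2*(A*pe V1 V2 V3)*V3 + A*qe V1 V2 V3 = A*((V3 - V1)*(V3 - V2)*(V3 - w4 V1 V2 V3))"
          unfolding pe_def qe_def w4_def by Groebner_Basis.algebra
      qed (use ad G1 in auto)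
    next
      case 4
      show ?thesis
      proof (rule droot[where Vt="w4 V1 V2 V3" and Va=V1 and Vb=V2 and Vc=V3])
        show "h r = G (w4 V1 V2 V3)" using 4 r by simp
        show "4*A*(w4 V1 V2 V3)^3 + 3*0*(w4 V1 V2 V3)^2 + 2*(A*pe V1 V2 V3)*(w4 V1 V2 V3) + A*qe V1 V2 V3 = A*((w4 V1 V2 V3 - V1)*(w4 V1 V2 V3 - V2)*(w4 V1 V2 V3 - V3))"
          unfolding pe_def qe_def w4_def by Groebner_Basis.algebra
      qed (use ad G1 in auto)
    qed
  qed
  thus ?thesis using q by blast
qed

end




lemma (in frobq) main_root:
  assumes hyp: "(p mod 3 = 1 \<and> [a^2*c^2 + 12*a^3*e = 0] (mod int p)
            \<and> cubic_nonresidue p (8*a^3*c^3 + 27*a^4*d^2))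
         \<or> (\<not> [a^2*c^2 + 12*a^3*e = 0] (mod int p)
            \<and> [s_seq a c d e (p + 1) = a^2*c^2 - 4*a^3*e] (mod int p))"
  shows "\<exists>r. int p dvd qf a b c d e r \<and> \<not> int p dvd dqf a b c d r"
proof (rule simple_root)
  fix v assume v: "v \<in> {zz1, zz2, zz3}"
  show "phi v \<noteq> v"
  proof
    assume fv: "phi v = v"
    from hyp show False
    proof
      assume h1: "p mod 3 = 1 \<and> [a^2*c^2 + 12*a^3*e = 0] (mod int p) \<and> cubic_nonresidue p (8*a^3*c^3 + 27*a^4*d^2)"
      hence "int p dvd a^2*c^2 + 12*a^3*e" by (simp add: cong_0_iff)
      thus False using nofix_case1 h1 v fv by blast
    next
      assume h2: "\<not> [a^2*c^2 + 12*a^3*e = 0] (mod int p) \<and> [s_seq a c d e (p + 1) = a^2*c^2 - 4*a^3*e] (mod int p)"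
      hence "\<not> int p dvd a^2*c^2 + 12*a^3*e" by (simp add: cong_0_iff)
      thus False using nofix_case2 h2 v fv by blast
    qed
  qed
qed

theorem theorem5p6:
  fixes a b c d e :: int and p :: nat
  assumes "a \<noteq> 0" and "b \<noteq> 0"
    and "prime p" and "p > 3"
    and "multiplicity (int p) b > 0"
    and "(p mod 3 = 1 \<and> [a^2*c^2 + 12*a^3*e = 0] (mod int p)
            \<and> cubic_nonresidue p (8*a^3*c^3 + 27*a^4*d^2))
         \<or> (\<not> [a^2*c^2 + 12*a^3*e = 0] (mod int p)
            \<and> [s_seq a c d e (p + 1) = a^2*c^2 - 4*a^3*e] (mod int p))"
  shows "padic_dense p (ratio_set (quartic_form a b c d e))"
proof -
  have pb: "int p dvd b" using assms(5) not_dvd_imp_multiplicity_0 by fastforce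
  have pa: "\<not> int p dvd a"
  proof
    assume pa: "int p dvd a"
    have I: "int p dvd a^2*c^2 + 12*a^3*e" using pa by (simp add: dvd_add dvd_mult2 power2_eq_square power3_eq_cube)
    have J: "int p dvd 8*a^3*c^3 + 27*a^4*d^2" using pa
      by (intro dvd_add) (simp_all add: power3_eq_cube power4_eq_xxxx)
    from assms(6) show False
    proof
      assume "p mod 3 = 1 \<and> [a^2*c^2 + 12*a^3*e = 0] (mod int p) \<and> cubic_nonresidue p (8*a^3*c^3 + 27*a^4*d^2)"
      thus False using J unfolding cubic_nonresidue_def by blast
    next
      assume "\<not> [a^2*c^2 + 12*a^3*e = 0] (mod int p) \<and> [s_seq a c d e (p + 1) = a^2*c^2 - 4*a^3*e] (mod int p)"
      thus False using I by (simp add: cong_0_iff)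
    qed
  qed
  interpret K: residues_prime p "residue_ring (int p)"
    by (simp add: residues_prime_def assms(3))
  define Lc where "Lc = K.alg_closure"
  have Lcl: "algebraic_closure Lc (K.indexed_const ` carrier (residue_ring (int p)))"
    and hom: "K.indexed_const \<in> ring_hom (residue_ring (int p)) Lc"
    unfolding Lc_def using K.alg_closureE by auto
  interpret Lc: algebraic_closure Lc "K.indexed_const ` carrier (residue_ring (int p))" by (rule Lcl)
  define h where "h = (\<lambda>n. (K.indexed_const (n mod int p) :: (int list \<times> nat) multiset \<Rightarrow> int))"
  have hc: "h n \<in> carrier Lc" for n
    unfolding h_def by (rule ring_hom_closed[OF hom]) simp
  have hadd: "h (m + n) = h m \<oplus>\<^bsub>Lc\<^esub> h n" for m n
  proof -
    have "h (m + n) = K.indexed_const ((m mod int p) \<oplus>\<^bsub>residue_ring (int p)\<^esub> (n mod int p))"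
      unfolding h_def by (simp add: K.add_cong)
    also have "\<dots> = h m \<oplus>\<^bsub>Lc\<^esub> h n" unfolding h_def by (rule ring_hom_add[OF hom]) simp_all
    finally show ?thesis .
  qed
  have hmult: "h (m * n) = h m \<otimes>\<^bsub>Lc\<^esub> h n" for m n
  proof -
    have "h (m * n) = K.indexed_const ((m mod int p) \<otimes>\<^bsub>residue_ring (int p)\<^esub> (n mod int p))"
      unfolding h_def by (simp add: K.mult_cong)
    also have "\<dots> = h m \<otimes>\<^bsub>Lc\<^esub> h n" unfolding h_def by (rule ring_hom_mult[OF hom]) simp_all
    finally show ?thesis .
  qed
  have hone: "h 1 = \<one>\<^bsub>Lc\<^esub>"
  proof -
    have "h 1 = K.indexed_const \<one>\<^bsub>residue_ring (int p)\<^esub>" unfolding h_def by (simp add: K.one_cong)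
    thus ?thesis using ring_hom_one[OF hom] by simp
  qed
  have hzero: "h n = \<zero>\<^bsub>Lc\<^esub> \<longleftrightarrow> int p dvd n" for n
  proof -
    have z: "(K.indexed_const \<zero>\<^bsub>residue_ring (int p)\<^esub> :: (int list \<times> nat) multiset \<Rightarrow> int) = \<zero>\<^bsub>Lc\<^esub>"
      by (rule ring_hom_zero[OF hom K.ring_axioms Lc.ring_axioms])
    have "h n = \<zero>\<^bsub>Lc\<^esub> \<longleftrightarrow> (K.indexed_const (n mod int p) :: (int list \<times> nat) multiset \<Rightarrow> int) = K.indexed_const \<zero>\<^bsub>residue_ring (int p)\<^esub>"
      unfolding h_def by (simp only: z)
    also have "\<dots> \<longleftrightarrow> n mod int p = \<zero>\<^bsub>residue_ring (int p)\<^esub>"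
      using K.indexed_const_is_inj by (auto dest: injD)
    also have "\<dots> \<longleftrightarrow> int p dvd n" by (simp add: K.zero_cong dvd_eq_mod_eq_0)
    finally show ?thesis .
  qed
  have fr: "frob Lc p h"
    by (intro frob.intro Lc.algebraically_closed_axioms frob_axioms.intro assms(3) assms(4) hc hadd hmult hone hzero)
  interpret F: frob Lc p h by (rule fr)
  obtain x y z where xyz: "x \<in> carrier Lc" "y \<in> carrier Lc" "z \<in> carrier Lc"
    "h c = F.G3 x y z (of_int a * pe V1 V2 V3)"
    "h d = F.G3 x y z (of_int a * qe V1 V2 V3)"
    "h e = F.G3 x y z (of_int a * re V1 V2 V3)"
    using F.quartic_split[OF pa] by blast
  interpret Q: frobq Lc p h a b c d e x y z
    by (intro frobq.intro fr frobq_axioms.intro pb pa xyz)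
  obtain r where r: "int p dvd qf a b c d e r" "\<not> int p dvd dqf a b c d r"
    using Q.main_root[OF assms(6)] by blast
  show ?thesis using density[OF assms(3) assms(1) r] .
qed



end
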